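(* Let $k$ be a positive integer and let $\mathbf a\in\mathscr S_k$ be such that $\mathcal s(\mathbf a)>0$. Assume there is a real number $\rho>1$ such that $d_l=\mathcal O(l^{\rho-1})$ for $l\ge k+1$. Then $\kappa_{\mathbf a}(s,u)=\sum_{m,n\ge1}a_{m,n}m^{-s}n^{-\bar u}$ is a positive semi-definite Dirichlet series kernel on $\mathbb H_\rho\times\mathbb H_\rho$. Moreover, for every integer $n\ge k+1$ the analytic symbol $A_{n,\mathbf a}(s)=\sum_{m\ge1}a_{m,n}m^{-s}$ is a Dirichlet polynomial, and the Dirichlet polynomials form a dense subspace of the associated reproducing kernel Hilbert space $\mathscr H_{\mathbf a}$.
   Context: Class $\mathscr S_k$: given a $k\times k$ complex matrix $\mathbf b=(b_{i,j})$, complex numbers $c_{k+1},c_{k+2},\dots$ and positive reals $d_{k+1},d_{k+2},\dots$, let $\mathbf a=(a_{m,n})_{m,n\ge1}$ be the block matrix $\begin{pmatrix}\mathbf b&\mathbf c\\\mathbf c^*&\mathbf d\end{pmatrix}$, where $\mathbf c$ is the $k\times\infty$ matrix all of whose rows equal $(c_{k+1},c_{k+2},\dots)$ and $\mathbf d=\mathrm{diag}(d_{k+1},d_{k+2},\dots)$; i.e. $a_{i,j}=b_{i,j}$ for $i,j\le k$, $a_{i,k+l}=c_{k+l}$ and $a_{k+l,i}=\overline{c_{k+l}}$ for $i\le k$, $l\ge1$, $a_{k+l,k+l}=d_{k+l}$, and $a_{k+l,k+l'}=0$ for $l\ne l'$. $\mathbf a\in\mathscr S_k$ if $\mathbf b$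 is positive semi-definite and $\sum_{l\ge1}|c_{k+l}|^2/d_{k+l}<\infty$; then $\mathcal s(\mathbf a)=\lambda_{\min}(\mathbf b)-k\sum_{l\ge1}|c_{k+l}|^2/d_{k+l}$, with $\lambda_{\min}$ the minimal eigenvalue. $\mathbb H_\rho=\{\Re s>\rho\}$. A Dirichlet series kernel on $\mathbb H_\rho$ is $\kappa_{\mathbf a}$ such that $(s,u)\mapsto\kappa_{\mathbf a}(s,\bar u)$ is regularly convergent on $\mathbb H_\rho\times\mathbb H_\rho$ (double series convergent and all row/column series convergent). $\mathscr H_{\mathbf a}$ is the reproducing kernel Hilbert space of functions on $\mathbb H_\rho$ with kernel $\kappa_{\mathbf a}$. A Dirichlet polynomial is a finite sum $\sum_{n=1}^Nc_nn^{-s}$. *)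

theory Defs
  imports "HOL-Analysis.Analysis" "HOL-Library.Landau_Symbols"
begin

text \<open>Matrices and sequences are indexed from 1; index 0 is unused.\<close>

text \<open>The block matrix a = (b c; c* d) built from the k x k matrix b,
  the sequence c (indices l \<ge> k+1) and the diagonal d (indices l \<ge> k+1).\<close>
definition block_mat ::
  "nat \<Rightarrow> (nat \<Rightarrow> nat \<Rightarrow> complex) \<Rightarrow> (nat \<Rightarrow> complex) \<Rightarrow> (nat \<Rightarrow> real) \<Rightarrow> nat \<Rightarrow> nat \<Rightarrow> complex"
  where "block_mat k b c d m n =
    (if m \<le> k \<and> n \<le> k then b m n
     else if m \<le> k then c n
     else if n \<le> k then cnj (c m)
     else if m = n then complex_of_real (d m) else 0)"

definition psd_mat :: "nat \<Rightarrow> (nat \<Rightarrow> nat \<Rightarrow> complex) \<Rightarrow> bool" where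
  "psd_mat k b \<longleftrightarrow>
     (\<forall>i\<in>{1..k}. \<forall>j\<in>{1..k}. b i j = cnj (b j i)) \<and>
     (\<forall>v :: nat \<Rightarrow> complex. let q = (\<Sum>i=1..k. \<Sum>j=1..k. cnj (v i) * b i j * v j)
                                in Im q = 0 \<and> Re q \<ge> 0)"

definition is_eigenvalue :: "nat \<Rightarrow> (nat \<Rightarrow> nat \<Rightarrow> complex) \<Rightarrow> complex \<Rightarrow> bool" where
  "is_eigenvalue k b lam \<longleftrightarrow>
     (\<exists>v :: nat \<Rightarrow> complex. (\<exists>i\<in>{1..k}. v i \<noteq> 0) \<and>
        (\<forall>i\<in>{1..k}. (\<Sum>j=1..k. b i j * v j) = lam * v i))"

text \<open>Minimal eigenvalue (eigenvalues of a Hermitian matrix are real).\<close>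
definition lambda_min :: "nat \<Rightarrow> (nat \<Rightarrow> nat \<Rightarrow> complex) \<Rightarrow> real" where
  "lambda_min k b = Inf {x :: real. is_eigenvalue k b (complex_of_real x)}"

definition in_S :: "nat \<Rightarrow> (nat \<Rightarrow> nat \<Rightarrow> complex) \<Rightarrow> (nat \<Rightarrow> complex) \<Rightarrow> (nat \<Rightarrow> real) \<Rightarrow> bool" where
  "in_S k b c d \<longleftrightarrow> psd_mat k b \<and> (\<forall>l>k. d l > 0) \<and>
     summable (\<lambda>l. (cmod (c (k + 1 + l)))\<^sup>2 / d (k + 1 + l))"

definition s_val :: "nat \<Rightarrow> (nat \<Rightarrow> nat \<Rightarrow> complex) \<Rightarrow> (nat \<Rightarrow> complex) \<Rightarrow> (nat \<Rightarrow> real) \<Rightarrow> real" where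
  "s_val k b c d = lambda_min k b - real k * (\<Sum>l. (cmod (c (k + 1 + l)))\<^sup>2 / d (k + 1 + l))"

definition half_plane :: "real \<Rightarrow> complex set" where
  "half_plane \<rho> = {s. Re s > \<rho>}"

definition double_partial :: "(nat \<Rightarrow> nat \<Rightarrow> complex) \<Rightarrow> nat \<times> nat \<Rightarrow> complex" where
  "double_partial f = (\<lambda>(M, N). \<Sum>m<M. \<Sum>n<N. f m n)"

definition regularly_convergent :: "(nat \<Rightarrow> nat \<Rightarrow> complex) \<Rightarrow> bool" where
  "regularly_convergent f \<longleftrightarrow>
     (\<exists>L. (double_partial f \<longlongrightarrow> L) (sequentially \<times>\<^sub>F sequentially)) \<and>
     (\<forall>m. summable (\<lambda>n. f m n)) \<and> (\<forall>n. summable (\<lambda>m. f m n))"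

definition double_sum :: "(nat \<Rightarrow> nat \<Rightarrow> complex) \<Rightarrow> complex" where
  "double_sum f = (THE L. (double_partial f \<longlongrightarrow> L) (sequentially \<times>\<^sub>F sequentially))"

definition dir_terms :: "(nat \<Rightarrow> nat \<Rightarrow> complex) \<Rightarrow> complex \<Rightarrow> complex \<Rightarrow> nat \<Rightarrow> nat \<Rightarrow> complex" where
  "dir_terms a s w = (\<lambda>m n. a (Suc m) (Suc n) * of_nat (Suc m) powr (- s) * of_nat (Suc n) powr (- w))"

definition kappa :: "(nat \<Rightarrow> nat \<Rightarrow> complex) \<Rightarrow> complex \<Rightarrow> complex \<Rightarrow> complex" where
  "kappa a s u = double_sum (dir_terms a s (cnj u))"

definition dirichlet_series_kernel :: "(nat \<Rightarrow> nat \<Rightarrow> complex) \<Rightarrow> real \<Rightarrow> bool" where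
  "dirichlet_series_kernel a \<rho> \<longleftrightarrow>
     (\<forall>s\<in>half_plane \<rho>. \<forall>u\<in>half_plane \<rho>. regularly_convergent (dir_terms a s u))"

definition psd_kernel :: "(complex \<Rightarrow> complex \<Rightarrow> complex) \<Rightarrow> complex set \<Rightarrow> bool" where
  "psd_kernel K X \<longleftrightarrow>
     (\<forall>N (x :: nat \<Rightarrow> complex) (c :: nat \<Rightarrow> complex). (\<forall>i<N. x i \<in> X) \<longrightarrow>
        (let q = (\<Sum>i<N. \<Sum>j<N. cnj (c i) * c j * K (x i) (x j)) in Im q = 0 \<and> Re q \<ge> 0))"

text \<open>Reproducing kernel Hilbert space of a psd kernel K on X (Aronszajn's description):
  f belongs to H_K iff there is C with |\<Sum> conj(c_i) f(x_i)|^2 \<le> C \<Sum> conj(c_i) c_j K(x_i,x_j)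
  for all finite families; the squared norm of f is the least such C.\<close>
definition rkhs_bound :: "(complex \<Rightarrow> complex \<Rightarrow> complex) \<Rightarrow> complex set \<Rightarrow> (complex \<Rightarrow> complex) \<Rightarrow> real \<Rightarrow> bool" where
  "rkhs_bound K X f C \<longleftrightarrow> C \<ge> 0 \<and>
     (\<forall>N (x :: nat \<Rightarrow> complex) (c :: nat \<Rightarrow> complex). (\<forall>i<N. x i \<in> X) \<longrightarrow>
        (cmod (\<Sum>i<N. cnj (c i) * f (x i)))\<^sup>2 \<le> C * Re (\<Sum>i<N. \<Sum>j<N. cnj (c i) * c j * K (x i) (x j)))"

definition in_rkhs :: "(complex \<Rightarrow> complex \<Rightarrow> complex) \<Rightarrow> complex set \<Rightarrow> (complex \<Rightarrow> complex) \<Rightarrow> bool" where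
  "in_rkhs K X f \<longleftrightarrow> (\<exists>C. rkhs_bound K X f C)"

definition rkhs_norm :: "(complex \<Rightarrow> complex \<Rightarrow> complex) \<Rightarrow> complex set \<Rightarrow> (complex \<Rightarrow> complex) \<Rightarrow> real" where
  "rkhs_norm K X f = sqrt (Inf {C. rkhs_bound K X f C})"

definition dirichlet_poly :: "nat \<Rightarrow> (nat \<Rightarrow> complex) \<Rightarrow> complex \<Rightarrow> complex" where
  "dirichlet_poly N c = (\<lambda>s. \<Sum>n=1..N. c n * of_nat n powr (- s))"

definition is_dirichlet_poly :: "(complex \<Rightarrow> complex) \<Rightarrow> bool" where
  "is_dirichlet_poly f \<longleftrightarrow> (\<exists>N c. f = dirichlet_poly N c)"

definition analytic_symbol :: "(nat \<Rightarrow> nat \<Rightarrow> complex) \<Rightarrow> nat \<Rightarrow> complex \<Rightarrow> complex" where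
  "analytic_symbol a n = (\<lambda>s. \<Sum>m. a (Suc m) n * of_nat (Suc m) powr (- s))"

end

theory Submission
  imports Defs
begin

definition sesq :: "nat \<Rightarrow> (nat \<Rightarrow> nat \<Rightarrow> complex) \<Rightarrow> (nat \<Rightarrow> complex) \<Rightarrow> (nat \<Rightarrow> complex) \<Rightarrow> complex" where
  "sesq k M x y = (\<Sum>i=1..k. \<Sum>j=1..k. cnj (x i) * M i j * y j)"

definition nsq :: "nat \<Rightarrow> (nat \<Rightarrow> complex) \<Rightarrow> real" where
  "nsq k v = (\<Sum>i=1..k. (cmod (v i))\<^sup>2)"

lemma sesq_expand:
  "sesq k M (\<lambda>i. x i + c * y i) (\<lambda>i. x i + c * y i) =
   sesq k M x x + c * sesq k M x y + cnj c * sesq k M y x + cnj c * c * sesq k M y y"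
proof -
  have e: "\<And>i j. cnj (x i + c * y i) * M i j * (x j + c * y j) = cnj (x i) * M i j * x j + c * (cnj (x i) * M i j * y j) + cnj c * (cnj (y i) * M i j * x j) + cnj c * c * (cnj (y i) * M i j * y j)"
    by (simp add: algebra_simps)
  show ?thesis unfolding sesq_def e sum.distrib sum_distrib_left ..
qed

lemma sesq_left_eq:
  "sesq k M u v = (\<Sum>i=1..k. cnj (u i) * (\<Sum>j=1..k. M i j * v j))"
  unfolding sesq_def sum_distrib_left mult.assoc ..

lemma sesq_right_eq:
  assumes herm: "\<forall>i\<in>{1..k}. \<forall>j\<in>{1..k}. M i j = cnj (M j i)"
  shows "sesq k M v u = (\<Sum>j=1..k. cnj (\<Sum>i=1..k. M j i * v i) * u j)"
proof -
  have "sesq k M v u = (\<Sum>j=1..k. \<Sum>i=1..k. cnj (v i) * M i j * u j)"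
    unfolding sesq_def by (rule sum.swap)
  also have "\<dots> = (\<Sum>j=1..k. \<Sum>i=1..k. cnj (M j i * v i) * u j)"
  proof (intro sum.cong refl)
    fix j i assume "j \<in> {1..k}" "i \<in> {1..k}"
    hence "M i j = cnj (M j i)" using herm by blast
    thus "cnj (v i) * M i j * u j = cnj (M j i * v i) * u j" by simp
  qed
  also have "\<dots> = (\<Sum>j=1..k. cnj (\<Sum>i=1..k. M j i * v i) * u j)"
    by (simp add: sum_distrib_right)
  finally show ?thesis .
qed

lemma psd_kernel_vec:
  assumes herm: "\<forall>i\<in>{1..k}. \<forall>j\<in>{1..k}. M i j = cnj (M j i)"
    and pos: "\<And>x. Re (sesq k M x x) \<ge> 0"
    and zero: "Re (sesq k M v v) = 0"
  shows "\<forall>i\<in>{1..k}. (\<Sum>j=1..k. M i j * v j) = 0"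
proof -
  define u where "u i = (\<Sum>j=1..k. M i j * v j)" for i
  define U where "U = (\<Sum>i=1..k. (cmod (u i))\<^sup>2)"
  have U0: "U \<ge> 0" unfolding U_def by (simp add: sum_nonneg)
  have uv: "sesq k M u v = of_real U"
    unfolding sesq_left_eq U_def u_def[symmetric] of_real_sum
    by (intro sum.cong refl) (metis complex_norm_square mult.commute)
  have vu: "sesq k M v u = of_real U"
    unfolding sesq_right_eq[OF herm] U_def u_def[symmetric] of_real_sum
    by (intro sum.cong refl) (metis complex_norm_square mult.commute)
  define R where "R = Re (sesq k M u u)"
  have ineq: "0 \<le> 2 * t * U + t\<^sup>2 * R" for t :: real
  proof -
    have "0 \<le> Re (sesq k M (\<lambda>i. v i + of_real t * u i) (\<lambda>i. v i + of_real t * u i))"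
      by (rule pos)
    also have "\<dots> = Re (sesq k M v v) + 2 * t * U + t\<^sup>2 * R"
      unfolding sesq_expand uv vu R_def 
      by (simp add: power2_eq_square)
    also have "\<dots> = 2 * t * U + t\<^sup>2 * R" using zero by simp
    finally show ?thesis .
  qed
  have "U = 0"
  proof (rule ccontr)
    assume "U \<noteq> 0"
    hence Upos: "U > 0" using U0 by simp
    define t where "t = - U / (\<bar>R\<bar> + 1)"
    have "0 \<le> 2 * t * U + t\<^sup>2 * R" by (rule ineq)
    moreover have "t\<^sup>2 * R \<le> t\<^sup>2 * (\<bar>R\<bar> + 1)" by (intro mult_left_mono) auto
    moreover have "t\<^sup>2 * (\<bar>R\<bar> + 1) = U * U / (\<bar>R\<bar> + 1)"
    proof -
      have a: "\<bar>R\<bar> + 1 > 0" by simp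
      show ?thesis unfolding t_def power2_eq_square using a
        by (simp add: divide_simps)
    qed
    moreover have "2 * t * U = - 2 * (U * U / (\<bar>R\<bar> + 1))"
      unfolding t_def by (simp add: divide_simps)
    moreover have "U * U / (\<bar>R\<bar> + 1) > 0" using Upos by simp
    ultimately show False by linarith
  qed
  hence z: "\<forall>i\<in>{1..k}. (cmod (u i))\<^sup>2 = 0"
    unfolding U_def by (subst (asm) sum_nonneg_eq_0_iff) auto
  show ?thesis
  proof
    fix i assume "i \<in> {1..k}"
    hence "(cmod (u i))\<^sup>2 = 0" using z by blast
    hence "u i = 0" by simp
    thus "(\<Sum>j=1..k. M i j * v j) = 0" unfolding u_def .
  qed
qed

lemma subseq_conv_finite:
  fixes u :: "nat \<Rightarrow> nat \<Rightarrow> complex"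
  assumes fin: "finite I" and bnd: "\<And>j i. cmod (u j i) \<le> B"
  shows "\<exists>r l. strict_mono r \<and> (\<forall>i\<in>I. (\<lambda>j. u (r j) i) \<longlonglongrightarrow> l i)"
  using fin
proof (induction I rule: finite_induct)
  case empty
  show ?case by (rule exI[of _ id]) (auto simp: strict_mono_def)
next
  case (insert i I)
  then obtain r l where r: "strict_mono r" and l: "\<forall>i\<in>I. (\<lambda>j. u (r j) i) \<longlonglongrightarrow> l i" by blast
  have "bounded (range (\<lambda>j. u (r j) i))"
    unfolding bounded_iff using bnd by blast
  then obtain l0 r0 where r0: "strict_mono r0" and l0: "((\<lambda>j. u (r j) i) \<circ> r0) \<longlonglongrightarrow> l0"
    using bounded_imp_convergent_subsequence by blast
  have "strict_mono (r \<circ> r0)" using r r0 by (rule strict_mono_o)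
  moreover have "\<forall>i'\<in>insert i I. (\<lambda>j. u ((r \<circ> r0) j) i') \<longlonglongrightarrow> (l(i := l0)) i'"
  proof
    fix i' assume "i' \<in> insert i I"
    show "(\<lambda>j. u ((r \<circ> r0) j) i') \<longlonglongrightarrow> (l(i := l0)) i'"
    proof (cases "i' = i")
      case True thus ?thesis using l0 by (simp add: o_def)
    next
      case False
      hence "i' \<in> I" using \<open>i' \<in> insert i I\<close> by simp
      hence "((\<lambda>j. u (r j) i') \<circ> r0) \<longlonglongrightarrow> l i'"
        using l r0 LIMSEQ_subseq_LIMSEQ by blast
      thus ?thesis using False by (simp add: o_def)
    qed
  qed
  ultimately show ?case by blast
qed

lemma sesq_scale: "sesq k M (\<lambda>i. c * x i) (\<lambda>i. c * x i) = cnj c * c * sesq k M x x"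
  unfolding sesq_def sum_distrib_left by (intro sum.cong refl) (simp add: algebra_simps)

lemma nsq_scale: "nsq k (\<lambda>i. c * x i) = (cmod c)\<^sup>2 * nsq k x"
  unfolding nsq_def sum_distrib_left by (intro sum.cong refl) (simp add: norm_mult power_mult_distrib)

lemma nsq_nonneg: "nsq k x \<ge> 0"
  unfolding nsq_def by (simp add: sum_nonneg)

lemma nsq_zero: "nsq k x = 0 \<Longrightarrow> i \<in> {1..k} \<Longrightarrow> x i = 0"
  unfolding nsq_def by (subst (asm) sum_nonneg_eq_0_iff) auto

lemma sesq_zero: "(\<And>i. i \<in> {1..k} \<Longrightarrow> x i = 0) \<Longrightarrow> sesq k M x x = 0"
  unfolding sesq_def by simp

lemma sesq_shift:
  "sesq k (\<lambda>i j. M i j - (if i = j then of_real m else 0)) x x = sesq k M x x - of_real (m * nsq k x)"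
proof -
  have "sesq k (\<lambda>i j. M i j - (if i = j then of_real m else 0)) x x =
        sesq k M x x - (\<Sum>i=1..k. \<Sum>j=1..k. cnj (x i) * (if i = j then of_real m else 0) * x j)"
    unfolding sesq_def sum_subtractf[symmetric] by (intro sum.cong refl) (simp add: algebra_simps)
  also have "(\<Sum>i=1..k. \<Sum>j=1..k. cnj (x i) * (if i = j then of_real m else 0) * x j) =
             (\<Sum>i=1..k. of_real m * (cnj (x i) * x i))"
  proof (intro sum.cong refl)
    fix i assume i: "i \<in> {1..k}"
    have "(\<Sum>j=1..k. cnj (x i) * (if i = j then of_real m else 0) * x j) =
          (\<Sum>j=1..k. if i = j then cnj (x i) * of_real m * x j else 0)"
      by (intro sum.cong) auto
    also have "\<dots> = cnj (x i) * of_real m * x i" using i by (simp add: sum.delta)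
    finally show "(\<Sum>j=1..k. cnj (x i) * (if i = j then of_real m else 0) * x j) = of_real m * (cnj (x i) * x i)"
      by (simp add: mult_ac)
  qed
  also have "\<dots> = of_real (m * nsq k x)"
    unfolding nsq_def of_real_mult of_real_sum sum_distrib_left
    by (intro sum.cong refl) (metis complex_norm_square mult.commute)
  finally show ?thesis .
qed

lemma psd_mat_sesq: "psd_mat k b \<Longrightarrow> Im (sesq k b v v) = 0 \<and> Re (sesq k b v v) \<ge> 0"
  unfolding psd_mat_def sesq_def Let_def by blast

lemma psd_mat_herm: "psd_mat k b \<Longrightarrow> \<forall>i\<in>{1..k}. \<forall>j\<in>{1..k}. b i j = cnj (b j i)"
  unfolding psd_mat_def by blast

lemma lambda_min_lower:
  assumes psd: "psd_mat k b" and k1: "k \<ge> 1"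
  shows "Re (sesq k b v v) \<ge> lambda_min k b * nsq k v"
proof -
  define S where "S = {Re (sesq k b x x) | x. nsq k x = 1}"
  define \<mu> where "\<mu> = Inf S"
  define e1 :: "nat \<Rightarrow> complex" where "e1 = (\<lambda>i. if i = 1 then 1 else 0)"
  have "nsq k e1 = (\<Sum>i=1..k. if i = 1 then 1 else 0)"
    unfolding nsq_def by (intro sum.cong) (auto simp: e1_def)
  hence "nsq k e1 = 1" using k1 by (simp add: sum.delta)
  hence Sne: "S \<noteq> {}" unfolding S_def by blast
  have Sbdd: "bdd_below S" unfolding S_def bdd_below_def using psd_mat_sesq[OF psd] by blast
  have Slow: "\<mu> \<le> Re (sesq k b x x)" if "nsq k x = 1" for x
    unfolding \<mu>_def using Sbdd that by (intro cInf_lower) (auto simp: S_def)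
  have "\<forall>j::nat. \<exists>x. nsq k x = 1 \<and> Re (sesq k b x x) < \<mu> + inverse (real (Suc j))"
  proof
    fix j :: nat
    have "Inf S < \<mu> + inverse (real (Suc j))" unfolding \<mu>_def by simp
    then obtain y where "y \<in> S" "y < \<mu> + inverse (real (Suc j))"
      using cInf_lessD[OF Sne] by blast
    thus "\<exists>x. nsq k x = 1 \<and> Re (sesq k b x x) < \<mu> + inverse (real (Suc j))"
      unfolding S_def by blast
  qed
  then obtain V where V: "\<And>j. nsq k (V j) = 1" "\<And>j. Re (sesq k b (V j) (V j)) < \<mu> + inverse (real (Suc j))"
    by metis
  define u where "u j i = (if i \<in> {1..k} then V j i else 0)" for j i
  have sesq_u: "sesq k M (u j) (u j) = sesq k M (V j) (V j)" for M j
    unfolding sesq_def u_def by (intro sum.cong refl) auto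
  have nsq_u: "nsq k (u j) = nsq k (V j)" for j
    unfolding nsq_def u_def by (intro sum.cong refl) auto
  have bnd: "cmod (u j i) \<le> 1" for j i
  proof (cases "i \<in> {1..k}")
    case True
    have "(cmod (V j i))\<^sup>2 \<le> nsq k (V j)"
      unfolding nsq_def using True by (intro member_le_sum) auto
    hence "(cmod (V j i))\<^sup>2 \<le> 1" using V(1) by simp
    hence "cmod (V j i) \<le> 1" by (simp add: power_le_one_iff abs_le_square_iff)
    thus ?thesis using True by (simp add: u_def)
  qed (auto simp: u_def)
  obtain r l where r: "strict_mono r" and l: "\<forall>i\<in>{1..k}. (\<lambda>j. u (r j) i) \<longlonglongrightarrow> l i"
    using subseq_conv_finite[of "{1..k}" u 1] bnd by blast
  have "(\<lambda>j. nsq k (u (r j))) \<longlonglongrightarrow> nsq k l"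
    unfolding nsq_def by (intro tendsto_sum tendsto_power tendsto_norm) (use l in auto)
  moreover have "(\<lambda>j. nsq k (u (r j))) = (\<lambda>j. 1)" using V(1) nsq_u by simp
  ultimately have "(\<lambda>j. 1::real) \<longlonglongrightarrow> nsq k l" by simp
  hence nl: "nsq k l = 1" by (simp add: LIMSEQ_const_iff)
  have "(\<lambda>j. Re (sesq k b (u (r j)) (u (r j)))) \<longlonglongrightarrow> Re (sesq k b l l)"
    unfolding sesq_def by (intro tendsto_Re tendsto_sum tendsto_mult tendsto_cnj tendsto_const) (use l in auto)
  moreover have "(\<lambda>j. Re (sesq k b (u (r j)) (u (r j)))) \<longlonglongrightarrow> \<mu>"
  proof (rule tendsto_sandwich[of "\<lambda>j. \<mu>" _ _ "\<lambda>j. \<mu> + inverse (real (Suc j))"])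
    show "\<forall>\<^sub>F j in sequentially. \<mu> \<le> Re (sesq k b (u (r j)) (u (r j)))"
      using Slow V(1) sesq_u nsq_u by simp
    have "Re (sesq k b (u (r j)) (u (r j))) \<le> \<mu> + inverse (real (Suc j))" for j
    proof -
      have "j \<le> r j" using r by (rule seq_suble)
      hence "inverse (real (Suc (r j))) \<le> inverse (real (Suc j))" by (simp add: le_imp_inverse_le)
      moreover have "Re (sesq k b (u (r j)) (u (r j))) = Re (sesq k b (V (r j)) (V (r j)))"
        using sesq_u by simp
      ultimately show ?thesis using V(2)[of "r j"] by linarith
    qed
    thus "\<forall>\<^sub>F j in sequentially. Re (sesq k b (u (r j)) (u (r j))) \<le> \<mu> + inverse (real (Suc j))"
      by simp
    show "(\<lambda>j. \<mu>) \<longlonglongrightarrow> \<mu>" by simp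
    show "(\<lambda>j. \<mu> + inverse (real (Suc j))) \<longlonglongrightarrow> \<mu>"
      using tendsto_add[OF tendsto_const[of \<mu>] LIMSEQ_inverse_real_of_nat] by simp
  qed
  ultimately have ql: "Re (sesq k b l l) = \<mu>" by (rule LIMSEQ_unique)
  have lowgen: "Re (sesq k b x x) \<ge> \<mu> * nsq k x" for x
  proof (cases "nsq k x = 0")
    case True
    hence "sesq k b x x = 0" using nsq_zero by (intro sesq_zero) blast
    thus ?thesis using True by simp
  next
    case False
    hence np: "nsq k x > 0" using nsq_nonneg[of k x] by simp
    define c where "c = complex_of_real (inverse (sqrt (nsq k x)))"
    have "nsq k (\<lambda>i. c * x i) = 1" unfolding nsq_scale c_def using np
      by (simp add: norm_inverse power_inverse)
    hence "\<mu> \<le> Re (sesq k b (\<lambda>i. c * x i) (\<lambda>i. c * x i))" by (rule Slow)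
    also have "\<dots> = Re (sesq k b x x) / nsq k x"
    proof -
      have "cnj c * c = complex_of_real ((inverse (sqrt (nsq k x)))\<^sup>2)"
        unfolding c_def by (simp add: power2_eq_square)
      also have "(inverse (sqrt (nsq k x)))\<^sup>2 = inverse (nsq k x)" using np by (simp add: power_inverse)
      finally have cc: "cnj c * c = complex_of_real (inverse (nsq k x))" .
      show ?thesis unfolding sesq_scale cc using np by (simp add: divide_inverse mult.commute power2_eq_square)
    qed
    finally show ?thesis using np by (simp add: field_simps)
  qed
  define M where "M = (\<lambda>i j. b i j - (if i = j then complex_of_real \<mu> else 0))"
  have hermM: "\<forall>i\<in>{1..k}. \<forall>j\<in>{1..k}. M i j = cnj (M j i)"
  proof (intro ballI)
    fix i j assume "i \<in> {1..k}" "j \<in> {1..k}"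
    hence "b i j = cnj (b j i)" using psd_mat_herm[OF psd] by blast
    thus "M i j = cnj (M j i)" unfolding M_def by simp
  qed
  have posM: "Re (sesq k M x x) \<ge> 0" for x
    unfolding M_def sesq_shift using lowgen[of x] by simp
  have zeroM: "Re (sesq k M l l) = 0"
    unfolding M_def sesq_shift using ql nl by simp
  have ev: "\<forall>i\<in>{1..k}. (\<Sum>j=1..k. M i j * l j) = 0"
    by (rule psd_kernel_vec[OF hermM posM zeroM])
  have "\<forall>i\<in>{1..k}. (\<Sum>j=1..k. b i j * l j) = complex_of_real \<mu> * l i"
  proof
    fix i assume i: "i \<in> {1..k}"
    have "(\<Sum>j=1..k. M i j * l j) = (\<Sum>j=1..k. b i j * l j) - (\<Sum>j=1..k. (if i = j then complex_of_real \<mu> * l j else 0))"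
      unfolding M_def sum_subtractf[symmetric] by (intro sum.cong refl) (simp add: algebra_simps)
    also have "(\<Sum>j=1..k. (if i = j then complex_of_real \<mu> * l j else 0)) = complex_of_real \<mu> * l i"
      using i by (simp add: sum.delta)
    finally show "(\<Sum>j=1..k. b i j * l j) = complex_of_real \<mu> * l i" using ev i by simp
  qed
  moreover have "\<exists>i\<in>{1..k}. l i \<noteq> 0"
  proof (rule ccontr)
    assume "\<not> ?thesis"
    hence "nsq k l = 0" unfolding nsq_def by simp
    thus False using nl by simp
  qed
  ultimately have "is_eigenvalue k b (complex_of_real \<mu>)" unfolding is_eigenvalue_def by blast
  moreover have "bdd_below {x :: real. is_eigenvalue k b (complex_of_real x)}"
  proof (rule bdd_belowI[of _ 0])
    fix x assume "x \<in> {x :: real. is_eigenvalue k b (complex_of_real x)}"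
    then obtain w where w0: "\<exists>i\<in>{1..k}. w i \<noteq> 0"
      and we: "\<forall>i\<in>{1..k}. (\<Sum>j=1..k. b i j * w j) = complex_of_real x * w i"
      unfolding is_eigenvalue_def by auto
    have "sesq k b w w = (\<Sum>i=1..k. cnj (w i) * (complex_of_real x * w i))"
      unfolding sesq_left_eq using we by (intro sum.cong refl) auto
    also have "\<dots> = complex_of_real (x * nsq k w)"
      unfolding nsq_def of_real_mult of_real_sum sum_distrib_left
      by (intro sum.cong refl) (metis complex_norm_square mult.commute mult.left_commute)
    finally have "Re (sesq k b w w) = x * nsq k w" by simp
    moreover have "nsq k w > 0"
    proof -
      have "nsq k w \<noteq> 0" using w0 nsq_zero by blast
      thus ?thesis using nsq_nonneg[of k w] by simp
    qed
    ultimately show "0 \<le> x" using psd_mat_sesq[OF psd, of w]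
      by (simp add: zero_le_mult_iff)
  qed
  ultimately have "lambda_min k b \<le> \<mu>" unfolding lambda_min_def by (intro cInf_lower) auto
  hence "lambda_min k b * nsq k v \<le> \<mu> * nsq k v" using nsq_nonneg by (intro mult_right_mono) auto
  thus ?thesis using lowgen[of v] by simp
qed

locale thm_setup =
  fixes k :: nat and b :: "nat \<Rightarrow> nat \<Rightarrow> complex" and c :: "nat \<Rightarrow> complex"
    and d :: "nat \<Rightarrow> real" and \<rho> :: real
  assumes k1: "k \<ge> 1"
    and inS: "in_S k b c d"
    and spos: "s_val k b c d > 0"
    and rho1: "\<rho> > 1"
    and dO: "d \<in> O(\<lambda>l. real l powr (\<rho> - 1))"
begin

abbreviation "a \<equiv> block_mat k b c d"

lemma psd: "psd_mat k b" using inS unfolding in_S_def by blast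
lemma dpos: "l > k \<Longrightarrow> d l > 0" using inS unfolding in_S_def by blast

definition cs :: "nat \<Rightarrow> real" where "cs l = (if l > k then (cmod (c l))\<^sup>2 / d l else 0)"
definition S :: real where "S = (\<Sum>l. (cmod (c (k + 1 + l)))\<^sup>2 / d (k + 1 + l))"
definition lam :: real where "lam = lambda_min k b"

lemma cs_nonneg: "cs l \<ge> 0"
  unfolding cs_def using dpos by (auto intro: divide_nonneg_pos)

lemma cs_summable: "summable cs"
proof -
  have "summable (\<lambda>l. (cmod (c (k + 1 + l)))\<^sup>2 / d (k + 1 + l))"
    using inS unfolding in_S_def by blast
  moreover have "(\<lambda>l. cs (l + (k + 1))) = (\<lambda>l. (cmod (c (k + 1 + l)))\<^sup>2 / d (k + 1 + l))"
    unfolding cs_def by (auto simp: add.commute)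
  ultimately show ?thesis using summable_iff_shift[of cs "k+1"] by simp
qed

lemma S_eq: "S = suminf cs"
proof -
  have "suminf cs = (\<Sum>l. cs (l + (k + 1))) + sum cs {..<k+1}"
    by (rule suminf_split_initial_segment[OF cs_summable])
  moreover have "sum cs {..<k+1} = 0" unfolding cs_def by simp
  moreover have "(\<lambda>l. cs (l + (k + 1))) = (\<lambda>l. (cmod (c (k + 1 + l)))\<^sup>2 / d (k + 1 + l))"
    unfolding cs_def by (auto simp: add.commute)
  ultimately show ?thesis unfolding S_def by simp
qed

lemma S_nonneg: "S \<ge> 0"
  unfolding S_eq using cs_summable cs_nonneg by (simp add: suminf_nonneg)

lemma cs_partial: "finite F \<Longrightarrow> sum cs F \<le> S"
  unfolding S_eq using cs_summable cs_nonneg by (intro sum_le_suminf) auto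

lemma lam_gt: "lam > real k * S"
  using spos unfolding s_val_def lam_def S_def by simp

lemma lam_pos: "lam > 0"
  using lam_gt S_nonneg by (smt (verit) of_nat_0_le_iff mult_nonneg_nonneg)

lemma d_bound: "\<exists>Cd>0. \<forall>\<^sub>F l in sequentially. \<bar>d l\<bar> \<le> Cd * real l powr (\<rho> - 1)"
proof -
  obtain C where C: "C > 0" "\<forall>\<^sub>F l in sequentially. norm (d l) \<le> C * norm (real l powr (\<rho> - 1))"
    using dO by (elim landau_o.bigE) auto
  thus ?thesis by (intro exI[of _ C]) auto
qed

lemma d_summable: "t > \<rho> \<Longrightarrow> summable (\<lambda>n. \<bar>d n\<bar> * real n powr (- t))"
proof -
  assume t: "t > \<rho>"
  obtain Cd where Cd: "Cd > 0" "\<forall>\<^sub>F l in sequentially. \<bar>d l\<bar> \<le> Cd * real l powr (\<rho> - 1)"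
    using d_bound by blast
  have "\<forall>\<^sub>F n in sequentially. norm (\<bar>d n\<bar> * real n powr (- t)) \<le> Cd * real n powr (\<rho> - 1 - t)"
    using Cd(2) eventually_gt_at_top[of 0]
  proof eventually_elim
    case (elim n)
    have "norm (\<bar>d n\<bar> * real n powr (- t)) = \<bar>d n\<bar> * real n powr (- t)" by simp
    also have "\<dots> \<le> Cd * real n powr (\<rho> - 1) * real n powr (- t)"
      using elim(1) by (intro mult_right_mono) auto
    also have "\<dots> = Cd * real n powr (\<rho> - 1 - t)"
      using elim(2) by (simp add: powr_add[symmetric] mult.assoc)
    finally show ?case .
  qed
  moreover have "summable (\<lambda>n. Cd * real n powr (\<rho> - 1 - t))"
    using t by (intro summable_mult) (simp add: summable_real_powr_iff)
  ultimately show ?thesis by (rule summable_comparison_test_ev)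
qed

definition ca :: "real \<Rightarrow> nat \<Rightarrow> real" where
  "ca \<sigma> n = (if n > k then cmod (c n) * real n powr (- \<sigma>) else 0)"

lemma ca_nonneg: "ca \<sigma> n \<ge> 0" unfolding ca_def by simp

lemma amgm_c: assumes "n > k" shows "cmod (c n) * real n powr (- \<sigma>) \<le> (cmod (c n))\<^sup>2 / d n + d n * real n powr (- 2 * \<sigma>)"
proof -
  have dn: "d n > 0" using dpos assms by simp
  have p: "real n powr (- 2 * \<sigma>) = (real n powr (- \<sigma>))\<^sup>2"
    by (simp add: powr_powr[symmetric] power2_eq_square powr_add[symmetric])
  define x where "x = cmod (c n)"
  define y where "y = real n powr (- \<sigma>)"
  have "0 \<le> (x - d n * y)\<^sup>2" by simp
  hence "2 * (x * (d n * y)) \<le> x\<^sup>2 + (d n * y)\<^sup>2" by (simp add: power2_diff)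
  hence "2 * x * y * d n \<le> x\<^sup>2 + d n * d n * y\<^sup>2" by (simp add: power_mult_distrib power2_eq_square algebra_simps)
  hence "2 * x * y \<le> x\<^sup>2 / d n + d n * y\<^sup>2" using dn by (simp add: field_simps power2_eq_square)
  moreover have "x * y \<ge> 0" unfolding x_def y_def by simp
  moreover have "x\<^sup>2 / d n \<ge> 0" "d n * y\<^sup>2 \<ge> 0" using dn by auto
  ultimately have "x * y \<le> x\<^sup>2 / d n + d n * y\<^sup>2" by linarith
  thus ?thesis unfolding x_def y_def p .
qed

lemma ca_summable: "\<sigma> > \<rho> \<Longrightarrow> summable (ca \<sigma>)"
proof -
  assume s: "\<sigma> > \<rho>"
  have "summable (\<lambda>n. cs n + \<bar>d n\<bar> * real n powr (- (2 * \<sigma>)))"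
    using s rho1 by (intro summable_add cs_summable d_summable) auto
  moreover have "norm (ca \<sigma> n) \<le> cs n + \<bar>d n\<bar> * real n powr (- (2 * \<sigma>))" for n
  proof (cases "n > k")
    case True
    thus ?thesis using amgm_c[OF True, of \<sigma>] dpos[OF True] unfolding ca_def cs_def by simp
  next
    case False
    thus ?thesis unfolding ca_def cs_def by simp
  qed
  ultimately show ?thesis by (rule summable_comparison_test'[where N=0])
qed

end

lemma rect_filterlim:
  "filterlim (\<lambda>(M::nat, N::nat). {..<M} \<times> {..<N}) (finite_subsets_at_top UNIV) (sequentially \<times>\<^sub>F sequentially)"
proof (subst filterlim_finite_subsets_at_top, intro allI impI)
  fix X :: "(nat \<times> nat) set" assume "finite X \<and> X \<subseteq> UNIV"
  hence fX: "finite X" by simp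
  obtain B1 where B1: "fst ` X \<subseteq> {..<B1}" using finite_nat_bounded[of "fst ` X"] fX by blast
  obtain B2 where B2: "snd ` X \<subseteq> {..<B2}" using finite_nat_bounded[of "snd ` X"] fX by blast
  have "X \<subseteq> {..<max B1 B2} \<times> {..<max B1 B2}"
  proof
    fix p assume "p \<in> X"
    hence "fst p < B1" "snd p < B2" using B1 B2 by auto
    thus "p \<in> {..<max B1 B2} \<times> {..<max B1 B2}" by (cases p) auto
  qed
  hence *: "\<forall>m\<ge>max B1 B2. \<forall>n\<ge>max B1 B2. X \<subseteq> {..<n} \<times> {..<m}" by fastforce
  show "\<forall>\<^sub>F y in sequentially \<times>\<^sub>F sequentially.
          finite (case y of (M, N) \<Rightarrow> {..<M} \<times> {..<N}) \<and>
          X \<subseteq> (case y of (M, N) \<Rightarrow> {..<M} \<times> {..<N}) \<and> (case y of (M, N) \<Rightarrow> {..<M} \<times> {..<N}) \<subseteq> UNIV"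
    unfolding eventually_prod_sequentially
  proof (intro exI[of _ "max B1 B2"] allI impI)
    fix m n :: nat assume mn: "max B1 B2 \<le> m" "max B1 B2 \<le> n"
    have "X \<subseteq> {..<n} \<times> {..<m}" using * mn by blast
    thus "finite (case (n, m) of (M, N) \<Rightarrow> {..<M} \<times> {..<N}) \<and>
          X \<subseteq> (case (n, m) of (M, N) \<Rightarrow> {..<M} \<times> {..<N}) \<and> (case (n, m) of (M, N) \<Rightarrow> {..<M} \<times> {..<N}) \<subseteq> UNIV"
      by simp
  qed
qed

lemma diag_filterlim: "filterlim (\<lambda>n::nat. (n, n)) (sequentially \<times>\<^sub>F sequentially) sequentially"
  unfolding filterlim_def le_filter_def eventually_filtermap eventually_prod_sequentially
  by (auto simp: eventually_sequentially)

lemma double_partial_eq: "double_partial f (M, N) = (\<Sum>(m,n)\<in>{..<M} \<times> {..<N}. f m n)"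
  unfolding double_partial_def by (simp add: sum.cartesian_product)

lemma summable_double:
  fixes f :: "nat \<Rightarrow> nat \<Rightarrow> complex"
  assumes sm: "(\<lambda>(m,n). f m n) summable_on UNIV"
  shows "(double_partial f \<longlongrightarrow> infsum (\<lambda>(m,n). f m n) UNIV) (sequentially \<times>\<^sub>F sequentially)"
    and "double_sum f = infsum (\<lambda>(m,n). f m n) UNIV"
    and "(\<lambda>N. double_partial f (N, N)) \<longlonglongrightarrow> double_sum f"
proof -
  define L where "L = infsum (\<lambda>(m,n). f m n) UNIV"
  have "((\<lambda>(m,n). f m n) has_sum L) UNIV" unfolding L_def using sm by (rule has_sum_infsum)
  hence hs: "(sum (\<lambda>(m,n). f m n) \<longlongrightarrow> L) (finite_subsets_at_top UNIV)" unfolding has_sum_def .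
  have "((\<lambda>x. sum (\<lambda>(m,n). f m n) ((\<lambda>(M, N). {..<M} \<times> {..<N}) x)) \<longlongrightarrow> L) (sequentially \<times>\<^sub>F sequentially)"
    by (rule filterlim_compose[OF hs rect_filterlim])
  moreover have "(\<lambda>x. sum (\<lambda>(m,n). f m n) ((\<lambda>(M, N). {..<M} \<times> {..<N}) x)) = double_partial f"
    by (auto simp: double_partial_eq)
  ultimately have lim: "(double_partial f \<longlongrightarrow> L) (sequentially \<times>\<^sub>F sequentially)" by simp
  thus "(double_partial f \<longlongrightarrow> infsum (\<lambda>(m,n). f m n) UNIV) (sequentially \<times>\<^sub>F sequentially)"
    unfolding L_def .
  have nb: "sequentially \<times>\<^sub>F sequentially \<noteq> (bot :: (nat \<times> nat) filter)"
    by (simp add: prod_filter_eq_bot)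
  have ds: "double_sum f = L"
    unfolding double_sum_def
  proof (rule the_equality)
    show "(double_partial f \<longlongrightarrow> L) (sequentially \<times>\<^sub>F sequentially)" by (rule lim)
    fix L' assume "(double_partial f \<longlongrightarrow> L') (sequentially \<times>\<^sub>F sequentially)"
    thus "L' = L" using lim nb tendsto_unique by blast
  qed
  thus "double_sum f = infsum (\<lambda>(m,n). f m n) UNIV" unfolding L_def .
  show "(\<lambda>N. double_partial f (N, N)) \<longlonglongrightarrow> double_sum f"
    unfolding ds using filterlim_compose[OF lim diag_filterlim] by simp
qed

context thm_setup
begin

lemma norm_npow: "cmod (of_nat m powr (- s)) = real m powr (- Re s)"
  by (subst norm_powr_real_powr) auto

lemma npow_le1: "m \<ge> 1 \<Longrightarrow> Re s \<ge> 0 \<Longrightarrow> cmod (of_nat m powr (- s)) \<le> 1"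
  unfolding norm_npow using ge_one_powr_ge_zero[of "real m" "Re s"] by (simp add: powr_minus inverse_le_1_iff)

definition beta :: real where "beta = 1 + (\<Sum>i=1..k. \<Sum>j=1..k. cmod (b i j))"

lemma beta_ge1: "beta \<ge> 1" unfolding beta_def by (simp add: sum_nonneg)

lemma b_le_beta: "i \<in> {1..k} \<Longrightarrow> j \<in> {1..k} \<Longrightarrow> cmod (b i j) \<le> beta"
proof -
  assume i: "i \<in> {1..k}" and j: "j \<in> {1..k}"
  have "cmod (b i j) \<le> (\<Sum>j=1..k. cmod (b i j))" using j by (intro member_le_sum) auto
  also have "\<dots> \<le> (\<Sum>i=1..k. \<Sum>j=1..k. cmod (b i j))" using i by (intro member_le_sum) (auto simp: sum_nonneg)
  finally show ?thesis unfolding beta_def by simp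
qed

definition PP :: "real \<Rightarrow> nat \<Rightarrow> real" where
  "PP \<sigma> m = (if Suc m \<le> k then beta else 0) + ca \<sigma> (Suc m)"

definition ee :: "real \<Rightarrow> nat \<Rightarrow> real" where
  "ee t m = (if Suc m > k then \<bar>d (Suc m)\<bar> * real (Suc m) powr (- t) else 0)"

lemma PP_nonneg: "PP \<sigma> m \<ge> 0" unfolding PP_def using beta_ge1 ca_nonneg[of \<sigma>] by simp
lemma ee_nonneg: "ee t m \<ge> 0" unfolding ee_def by simp

lemma PP_summable: "\<sigma> > \<rho> \<Longrightarrow> summable (PP \<sigma>)"
proof -
  assume s: "\<sigma> > \<rho>"
  have "summable (\<lambda>m. if Suc m \<le> k then beta else 0)"
    by (rule summable_finite[of "{..<k}"]) auto
  moreover have "summable (\<lambda>m. ca \<sigma> (Suc m))"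
    using summable_iff_shift[of "ca \<sigma>" 1] ca_summable[OF s] by simp
  ultimately show ?thesis unfolding PP_def by (rule summable_add)
qed

lemma ee_summable: "t > \<rho> \<Longrightarrow> summable (ee t)"
proof -
  assume t: "t > \<rho>"
  have "summable (\<lambda>m. \<bar>d (Suc m)\<bar> * real (Suc m) powr (- t))"
    using summable_iff_shift[of "\<lambda>n. \<bar>d n\<bar> * real n powr (- t)" 1] d_summable[OF t] by simp
  thus ?thesis unfolding ee_def
    by (rule summable_comparison_test'[where N=0]) auto
qed

lemma dir_terms_bound:
  assumes s: "Re s > \<rho>" and u: "Re u > \<rho>"
  shows "cmod (dir_terms a s u m n) \<le> PP (Re s) m * PP (Re u) n + (if m = n then ee (Re s + Re u) m else 0)"
proof -
  have p1: "cmod (of_nat (Suc m) powr (- s)) \<le> 1" using s rho1 by (intro npow_le1) auto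
  have p2: "cmod (of_nat (Suc n) powr (- u)) \<le> 1" using u rho1 by (intro npow_le1) auto
  have nn: "PP (Re s) m * PP (Re u) n \<ge> 0" using PP_nonneg by simp
  have en: "(if m = n then ee (Re s + Re u) m else 0) \<ge> 0" using ee_nonneg by simp
  have eq: "cmod (dir_terms a s u m n) = cmod (a (Suc m) (Suc n)) * cmod (of_nat (Suc m) powr (- s)) * cmod (of_nat (Suc n) powr (- u))"
    unfolding dir_terms_def by (simp add: norm_mult)
  show ?thesis
  proof (cases "Suc m \<le> k")
    case m: True
    show ?thesis
    proof (cases "Suc n \<le> k")
      case n: True
      have "cmod (dir_terms a s u m n) \<le> cmod (b (Suc m) (Suc n)) * 1 * 1"
        unfolding eq using m n p1 p2 by (intro mult_mono) (auto simp: block_mat_def)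
      also have "\<dots> \<le> beta" using m n by (intro order.trans[OF _ b_le_beta]) auto
      also have "\<dots> \<le> beta * beta" using beta_ge1 by simp
      also have "\<dots> = PP (Re s) m * PP (Re u) n" unfolding PP_def ca_def using m n by simp
      finally show ?thesis using en by simp
    next
      case n: False
      have "cmod (dir_terms a s u m n) = cmod (c (Suc n)) * cmod (of_nat (Suc m) powr (- s)) * cmod (of_nat (Suc n) powr (- u))"
        unfolding eq using m n by (simp add: block_mat_def)
      also have "\<dots> \<le> cmod (c (Suc n)) * 1 * cmod (of_nat (Suc n) powr (- u))"
        using p1 by (intro mult_mono) auto
      also have "\<dots> = ca (Re u) (Suc n)" unfolding ca_def norm_npow using n by simp
      also have "\<dots> \<le> beta * ca (Re u) (Suc n)" using beta_ge1 ca_nonneg[of "Re u" "Suc n"]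
        by (simp add: mult_le_cancel_right1)
      also have "\<dots> = PP (Re s) m * PP (Re u) n" unfolding PP_def using m n by (simp add: ca_def)
      finally show ?thesis using en by simp
    qed
  next
    case m: False
    show ?thesis
    proof (cases "Suc n \<le> k")
      case n: True
      have "cmod (dir_terms a s u m n) = cmod (c (Suc m)) * cmod (of_nat (Suc m) powr (- s)) * cmod (of_nat (Suc n) powr (- u))"
        unfolding eq using m n by (simp add: block_mat_def)
      also have "\<dots> \<le> cmod (c (Suc m)) * cmod (of_nat (Suc m) powr (- s)) * 1"
        using p2 by (intro mult_mono) auto
      also have "\<dots> = ca (Re s) (Suc m)" unfolding ca_def norm_npow using m by simp
      also have "\<dots> \<le> ca (Re s) (Suc m) * beta" using beta_ge1 ca_nonneg[of "Re s" "Suc m"]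
        by (simp add: mult_le_cancel_left1)
      also have "\<dots> = PP (Re s) m * PP (Re u) n" unfolding PP_def using m n by (simp add: ca_def)
      finally show ?thesis using en by simp
    next
      case n: False
      show ?thesis
      proof (cases "m = n")
        case True
        have "cmod (dir_terms a s u m n) = \<bar>d (Suc m)\<bar> * (real (Suc m) powr (- Re s) * real (Suc m) powr (- Re u))"
          unfolding eq norm_npow using m n True by (simp add: block_mat_def)
        also have "\<dots> = ee (Re s + Re u) m" unfolding ee_def using m
          by (simp add: powr_add[symmetric])
        finally show ?thesis using nn True by simp
      next
        case False
        have "cmod (dir_terms a s u m n) = 0"
          unfolding eq using m n False by (simp add: block_mat_def)
        thus ?thesis using nn en by simp
      qed
    qed
  qed
qed

end

lemma finite_pairs_bounded:
  fixes F :: "(nat \<times> nat) set"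
  assumes "finite F" shows "\<exists>N. F \<subseteq> {..<N} \<times> {..<N}"
proof -
  obtain B1 where B1: "fst ` F \<subseteq> {..<B1}" using finite_nat_bounded[of "fst ` F"] assms by blast
  obtain B2 where B2: "snd ` F \<subseteq> {..<B2}" using finite_nat_bounded[of "snd ` F"] assms by blast
  have "F \<subseteq> {..<max B1 B2} \<times> {..<max B1 B2}"
  proof
    fix p assume "p \<in> F"
    hence "fst p < B1" "snd p < B2" using B1 B2 by auto
    thus "p \<in> {..<max B1 B2} \<times> {..<max B1 B2}" by (cases p) auto
  qed
  thus ?thesis by blast
qed

context thm_setup
begin

definition GG :: "real \<Rightarrow> real \<Rightarrow> nat \<times> nat \<Rightarrow> real" where
  "GG \<sigma> \<tau> = (\<lambda>(m,n). PP \<sigma> m * PP \<tau> n + (if m = n then ee (\<sigma> + \<tau>) m else 0))"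

lemma GG_nonneg: "GG \<sigma> \<tau> p \<ge> 0"
  unfolding GG_def using PP_nonneg ee_nonneg by (auto split: prod.splits)

lemma GG_summable:
  assumes s: "\<sigma> > \<rho>" and t: "\<tau> > \<rho>"
  shows "GG \<sigma> \<tau> summable_on UNIV"
proof (rule nonneg_bdd_above_summable_on)
  show "\<And>x. x \<in> UNIV \<Longrightarrow> 0 \<le> GG \<sigma> \<tau> x" by (rule GG_nonneg)
  define B where "B = suminf (PP \<sigma>) * suminf (PP \<tau>) + suminf (ee (\<sigma> + \<tau>))"
  have "sum (GG \<sigma> \<tau>) F \<le> B" if F: "finite F" for F
  proof -
    obtain N where N: "F \<subseteq> {..<N} \<times> {..<N}" using finite_pairs_bounded[OF F] by blast
    have "sum (GG \<sigma> \<tau>) F \<le> sum (GG \<sigma> \<tau>) ({..<N} \<times> {..<N})"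
      using N GG_nonneg by (intro sum_mono2) auto
    also have "\<dots> = (\<Sum>m<N. \<Sum>n<N. PP \<sigma> m * PP \<tau> n + (if m = n then ee (\<sigma> + \<tau>) m else 0))"
      unfolding GG_def sum.cartesian_product by simp
    also have "\<dots> = (\<Sum>m<N. PP \<sigma> m) * (\<Sum>n<N. PP \<tau> n) + (\<Sum>m<N. ee (\<sigma> + \<tau>) m)"
      by (simp add: sum.distrib sum_product sum.delta)
    also have "\<dots> \<le> B" unfolding B_def
    proof (intro add_mono mult_mono)
      show "(\<Sum>m<N. PP \<sigma> m) \<le> suminf (PP \<sigma>)"
        using PP_summable[OF s] PP_nonneg by (intro sum_le_suminf) auto
      show "(\<Sum>m<N. PP \<tau> m) \<le> suminf (PP \<tau>)"
        using PP_summable[OF t] PP_nonneg by (intro sum_le_suminf) auto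
      show "(\<Sum>m<N. ee (\<sigma> + \<tau>) m) \<le> suminf (ee (\<sigma> + \<tau>))"
        using ee_summable[of "\<sigma> + \<tau>"] s t rho1 ee_nonneg by (intro sum_le_suminf) auto
      show "0 \<le> suminf (PP \<sigma>)" using PP_summable[OF s] PP_nonneg by (intro suminf_nonneg) auto
      show "0 \<le> (\<Sum>m<N. PP \<tau> m)" using PP_nonneg by (intro sum_nonneg) auto
    qed
    finally show ?thesis .
  qed
  thus "bdd_above (sum (GG \<sigma> \<tau>) ` {F. F \<subseteq> UNIV \<and> finite F})"
    by (intro bdd_aboveI[of _ B]) auto
qed

lemma regconv:
  assumes s: "Re s > \<rho>" and u: "Re u > \<rho>"
  shows "regularly_convergent (dir_terms a s u)"
    and "(\<lambda>(m,n). dir_terms a s u m n) summable_on UNIV"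
    and "(\<lambda>N. double_partial (dir_terms a s u) (N, N)) \<longlonglongrightarrow> double_sum (dir_terms a s u)"
proof -
  let ?f = "dir_terms a s u"
  have bnd: "norm (?f m n) \<le> PP (Re s) m * PP (Re u) n + (if m = n then ee (Re s + Re u) m else 0)" for m n
    using dir_terms_bound[OF s u] by simp
  have "(\<lambda>p. norm (case p of (m,n) \<Rightarrow> ?f m n)) summable_on UNIV"
    using GG_summable[OF s u]
    by (rule Infinite_Sum.abs_summable_on_comparison_test') (use bnd in \<open>auto simp: GG_def\<close>)
  hence sm: "(\<lambda>(m,n). ?f m n) summable_on UNIV" by (rule abs_summable_summable)
  thus "(\<lambda>(m,n). ?f m n) summable_on UNIV" .
  have rows: "summable (\<lambda>n. ?f m n)" for m
  proof (rule summable_comparison_test'[where N=0])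
    show "summable (\<lambda>n. PP (Re s) m * PP (Re u) n + (if m = n then ee (Re s + Re u) m else 0))"
      by (rule summable_add[OF summable_mult[OF PP_summable[OF u]] summable_finite[of "{m}"]]) auto
    show "norm (?f m n) \<le> PP (Re s) m * PP (Re u) n + (if m = n then ee (Re s + Re u) m else 0)" for n
      by (rule bnd)
  qed
  have cols: "summable (\<lambda>m. ?f m n)" for n
  proof (rule summable_comparison_test'[where N=0])
    show "summable (\<lambda>m. PP (Re s) m * PP (Re u) n + (if m = n then ee (Re s + Re u) m else 0))"
      by (rule summable_add[OF summable_mult2[OF PP_summable[OF s]] summable_finite[of "{n}"]]) auto
    show "norm (?f m n) \<le> PP (Re s) m * PP (Re u) n + (if m = n then ee (Re s + Re u) m else 0)" for m
      by (rule bnd)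
  qed
  show "regularly_convergent ?f"
    unfolding regularly_convergent_def using summable_double(1)[OF sm] rows cols by blast
  show "(\<lambda>N. double_partial ?f (N, N)) \<longlonglongrightarrow> double_sum ?f"
    by (rule summable_double(3)[OF sm])
qed

lemma kernel_part1: "dirichlet_series_kernel a \<rho>"
  unfolding dirichlet_series_kernel_def half_plane_def using regconv(1) by blast

end

context thm_setup
begin

definition om :: "nat \<Rightarrow> real" where "om n = (if n = 0 then 0 else if n \<le> k then 1 else d n)"
definition PN :: "nat \<Rightarrow> (nat \<Rightarrow> complex) \<Rightarrow> complex" where
  "PN N w = (\<Sum>m=1..N. \<Sum>n=1..N. a m n * cnj (w m) * w n)"
definition wN :: "nat \<Rightarrow> (nat \<Rightarrow> complex) \<Rightarrow> real" where
  "wN N w = (\<Sum>n=1..N. om n * (cmod (w n))\<^sup>2)"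
definition Ws :: "(nat \<Rightarrow> complex) \<Rightarrow> complex" where "Ws w = (\<Sum>m=1..k. w m)"
definition TN :: "nat \<Rightarrow> (nat \<Rightarrow> complex) \<Rightarrow> complex" where "TN N w = (\<Sum>l=k+1..N. c l * w l)"
definition DN :: "nat \<Rightarrow> (nat \<Rightarrow> complex) \<Rightarrow> real" where "DN N w = (\<Sum>l=k+1..N. d l * (cmod (w l))\<^sup>2)"

lemma om_pos: "n \<ge> 1 \<Longrightarrow> om n > 0" unfolding om_def using dpos by auto
lemma om_nonneg: "om n \<ge> 0" unfolding om_def using dpos by (auto simp: less_imp_le)

lemma split_ivl: "N \<ge> k \<Longrightarrow> {1..N} = {1..k} \<union> {k+1..N}" by auto
lemma disj_ivl: "{1..k} \<inter> {k+1..N} = {}" by auto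

lemma DN_nonneg: "DN N w \<ge> 0" unfolding DN_def using dpos by (intro sum_nonneg) (auto simp: less_imp_le)

lemma wN_eq: "N \<ge> k \<Longrightarrow> wN N w = nsq k w + DN N w"
proof -
  assume N: "N \<ge> k"
  have "wN N w = (\<Sum>n=1..k. om n * (cmod (w n))\<^sup>2) + (\<Sum>n=k+1..N. om n * (cmod (w n))\<^sup>2)"
    unfolding wN_def split_ivl[OF N] by (rule sum.union_disjoint) auto
  also have "(\<Sum>n=1..k. om n * (cmod (w n))\<^sup>2) = nsq k w"
    unfolding nsq_def by (intro sum.cong refl) (auto simp: om_def)
  also have "(\<Sum>n=k+1..N. om n * (cmod (w n))\<^sup>2) = DN N w"
    unfolding DN_def by (intro sum.cong refl) (auto simp: om_def)
  finally show ?thesis .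
qed

lemma PN_decomp:
  assumes N: "N \<ge> k"
  shows "PN N w = sesq k b w w + cnj (Ws w) * TN N w + cnj (TN N w) * Ws w + of_real (DN N w)"
proof -
  let ?A = "{1..k}" and ?B = "{k+1..N}"
  let ?g = "\<lambda>m n. a m n * cnj (w m) * w n"
  have fA: "finite ?A" and fB: "finite ?B" by auto
  have inner: "(\<Sum>n=1..N. ?g m n) = (\<Sum>n\<in>?A. ?g m n) + (\<Sum>n\<in>?B. ?g m n)" for m
    unfolding split_ivl[OF N] by (rule sum.union_disjoint) auto
  have "PN N w = (\<Sum>m\<in>?A. \<Sum>n=1..N. ?g m n) + (\<Sum>m\<in>?B. \<Sum>n=1..N. ?g m n)"
    unfolding PN_def split_ivl[OF N] by (rule sum.union_disjoint) auto
  also have "\<dots> = ((\<Sum>m\<in>?A. \<Sum>n\<in>?A. ?g m n) + (\<Sum>m\<in>?A. \<Sum>n\<in>?B. ?g m n)) +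
                  ((\<Sum>m\<in>?B. \<Sum>n\<in>?A. ?g m n) + (\<Sum>m\<in>?B. \<Sum>n\<in>?B. ?g m n))"
    unfolding inner sum.distrib ..
  also have "(\<Sum>m\<in>?A. \<Sum>n\<in>?A. ?g m n) = sesq k b w w"
    unfolding sesq_def by (intro sum.cong refl) (auto simp: block_mat_def mult_ac)
  also have "(\<Sum>m\<in>?A. \<Sum>n\<in>?B. ?g m n) = (\<Sum>m\<in>?A. \<Sum>n\<in>?B. cnj (w m) * (c n * w n))"
    by (intro sum.cong refl) (auto simp: block_mat_def mult_ac)
  also have "\<dots> = cnj (Ws w) * TN N w"
    unfolding Ws_def TN_def cnj_sum sum_product ..
  also have "(\<Sum>m\<in>?B. \<Sum>n\<in>?A. ?g m n) = (\<Sum>m\<in>?B. \<Sum>n\<in>?A. cnj (c m * w m) * w n)"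
    by (intro sum.cong refl) (auto simp: block_mat_def mult_ac)
  also have "\<dots> = cnj (TN N w) * Ws w"
    unfolding Ws_def TN_def cnj_sum sum_product ..
  also have "(\<Sum>m\<in>?B. \<Sum>n\<in>?B. ?g m n) = (\<Sum>m\<in>?B. \<Sum>n\<in>?B. if m = n then of_real (d m) * (cnj (w m) * w m) else 0)"
    by (intro sum.cong refl) (auto simp: block_mat_def mult_ac)
  also have "\<dots> = (\<Sum>m\<in>?B. of_real (d m) * (cnj (w m) * w m))"
    by (intro sum.cong refl) (simp add: sum.delta)
  also have "\<dots> = of_real (DN N w)"
    unfolding DN_def of_real_sum
    by (intro sum.cong refl) (metis complex_norm_square mult.commute of_real_mult)
  finally show ?thesis by (simp add: add_ac)
qed

end

lemma sum_abs_sq_le: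
  fixes f :: "nat \<Rightarrow> real"
  shows "(\<Sum>i\<in>A. \<bar>f i\<bar>)\<^sup>2 \<le> real (card A) * (\<Sum>i\<in>A. (f i)\<^sup>2)"
proof -
  have "(\<Sum>i\<in>A. \<bar>f i\<bar> * \<bar>1\<bar>) \<le> L2_set f A * L2_set (\<lambda>_. 1) A" by (rule L2_set_mult_ineq)
  hence "(\<Sum>i\<in>A. \<bar>f i\<bar>)\<^sup>2 \<le> (L2_set f A * L2_set (\<lambda>_. 1::real) A)\<^sup>2"
    by (intro power_mono) (auto simp: sum_nonneg)
  also have "\<dots> = (\<Sum>i\<in>A. (f i)\<^sup>2) * real (card A)"
    unfolding power_mult_distrib L2_set_def by (simp add: sum_nonneg)
  finally show ?thesis by (simp add: mult.commute)
qed

context thm_setup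
begin

definition Bb :: real where "Bb = (\<Sum>i=1..k. \<Sum>j=1..k. cmod (b i j))"

lemma Ws_sq: "(cmod (Ws w))\<^sup>2 \<le> real k * nsq k w"
proof -
  have "cmod (Ws w) \<le> (\<Sum>m=1..k. cmod (w m))" unfolding Ws_def by (rule norm_sum)
  hence "(cmod (Ws w))\<^sup>2 \<le> (\<Sum>m=1..k. \<bar>cmod (w m)\<bar>)\<^sup>2" by (intro power_mono) auto
  also have "\<dots> \<le> real (card {1..k}) * (\<Sum>m=1..k. (cmod (w m))\<^sup>2)" by (rule sum_abs_sq_le)
  finally show ?thesis unfolding nsq_def by simp
qed

lemma sesq_bound: "cmod (sesq k b w w) \<le> Bb * nsq k w"
proof -
  have t: "cmod (cnj (w i) * b i j * w j) \<le> cmod (b i j) * nsq k w" if "i \<in> {1..k}" "j \<in> {1..k}" for i j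
  proof -
    have ni: "(cmod (w i))\<^sup>2 \<le> nsq k w" unfolding nsq_def using that by (intro member_le_sum) auto
    have nj: "(cmod (w j))\<^sup>2 \<le> nsq k w" unfolding nsq_def using that by (intro member_le_sum) auto
    have "cmod (w i) * cmod (w j) \<le> ((cmod (w i))\<^sup>2 + (cmod (w j))\<^sup>2) / 2"
      using sum_squares_bound[of "cmod (w i)" "cmod (w j)"] by (simp add: power2_eq_square)
    also have "\<dots> \<le> nsq k w" using ni nj by simp
    finally have "cmod (w i) * cmod (w j) \<le> nsq k w" .
    hence "cmod (b i j) * (cmod (w i) * cmod (w j)) \<le> cmod (b i j) * nsq k w"
      by (intro mult_left_mono) auto
    thus ?thesis by (simp add: norm_mult mult_ac)
  qed
  have "cmod (sesq k b w w) \<le> (\<Sum>i=1..k. \<Sum>j=1..k. cmod (cnj (w i) * b i j * w j))"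
    unfolding sesq_def by (rule order.trans[OF norm_sum sum_mono]) (rule norm_sum)
  also have "\<dots> \<le> (\<Sum>i=1..k. \<Sum>j=1..k. cmod (b i j) * nsq k w)"
    using t by (intro sum_mono) auto
  also have "\<dots> = Bb * nsq k w" unfolding Bb_def by (simp add: sum_distrib_right)
  finally show ?thesis .
qed

lemma cross_bound:
  assumes th: "\<theta> > 0"
  shows "2 * cmod (Ws w) * cmod (TN N w) \<le> (cmod (Ws w))\<^sup>2 * S / \<theta> + \<theta> * DN N w"
proof -
  define X where "X = cmod (Ws w)"
  have X0: "X \<ge> 0" unfolding X_def by simp
  have trm: "2 * X * (cmod (c l) * cmod (w l)) \<le> X\<^sup>2 * cs l / \<theta> + \<theta> * (d l * (cmod (w l))\<^sup>2)"
    if l: "l \<in> {k+1..N}" for l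
  proof -
    have dl: "d l > 0" using dpos l by auto
    define p where "p = X * cmod (c l)"
    define q where "q = \<theta> * d l * cmod (w l)"
    have "0 \<le> (p - q)\<^sup>2" by simp
    hence "2 * p * q \<le> p\<^sup>2 + q\<^sup>2" by (simp add: power2_diff)
    hence "2 * p * q / (\<theta> * d l) \<le> (p\<^sup>2 + q\<^sup>2) / (\<theta> * d l)"
      using th dl by (intro divide_right_mono) auto
    moreover have "2 * p * q / (\<theta> * d l) = 2 * X * (cmod (c l) * cmod (w l))"
      unfolding p_def q_def using th dl by (simp add: field_simps)
    moreover have "(p\<^sup>2 + q\<^sup>2) / (\<theta> * d l) = X\<^sup>2 * cs l / \<theta> + \<theta> * (d l * (cmod (w l))\<^sup>2)"
      unfolding p_def q_def cs_def using th dl l by (simp add: field_simps power2_eq_square)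
    ultimately show ?thesis by simp
  qed
  have "2 * X * cmod (TN N w) \<le> 2 * X * (\<Sum>l=k+1..N. cmod (c l) * cmod (w l))"
    unfolding TN_def using X0 by (intro mult_left_mono order.trans[OF norm_sum]) (auto simp: norm_mult)
  also have "\<dots> = (\<Sum>l=k+1..N. 2 * X * (cmod (c l) * cmod (w l)))" by (simp add: sum_distrib_left)
  also have "\<dots> \<le> (\<Sum>l=k+1..N. X\<^sup>2 * cs l / \<theta> + \<theta> * (d l * (cmod (w l))\<^sup>2))"
    using trm by (intro sum_mono) auto
  also have "\<dots> = X\<^sup>2 / \<theta> * (\<Sum>l=k+1..N. cs l) + \<theta> * DN N w"
    unfolding DN_def by (simp add: sum.distrib sum_distrib_left)
  also have "\<dots> \<le> X\<^sup>2 / \<theta> * S + \<theta> * DN N w"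
    using th cs_partial[of "{k+1..N}"] by (intro add_mono mult_left_mono) auto
  finally show ?thesis unfolding X_def by simp
qed

definition th0 :: real where "th0 = (lam + real k * S) / (2 * lam)"
definition eta :: real where "eta = min (lam - real k * S / th0) (1 - th0)"
definition C2 :: real where "C2 = Bb + real k * S + 2"

lemma th0_pos: "th0 > 0" and th0_lt1: "th0 < 1"
proof -
  have kS: "real k * S \<ge> 0" using S_nonneg by simp
  show "th0 > 0" unfolding th0_def using lam_pos kS by simp
  show "th0 < 1" unfolding th0_def using lam_pos lam_gt by (simp add: divide_less_eq)
qed

lemma eta_pos: "eta > 0"
proof -
  have "real k * S / th0 < lam"
  proof -
    have "real k * S / th0 = 2 * lam * (real k * S) / (lam + real k * S)"
      unfolding th0_def using lam_pos S_nonneg by (simp add: field_simps add_pos_nonneg)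
    also have "\<dots> < lam"
    proof -
      have p: "lam + real k * S > 0" using lam_pos S_nonneg by (simp add: add_pos_nonneg)
      have "2 * lam * (real k * S) < lam * (lam + real k * S)"
        using lam_pos lam_gt by (simp add: algebra_simps)
      thus ?thesis using p by (simp add: divide_less_eq)
    qed
    finally show ?thesis .
  qed
  thus ?thesis unfolding eta_def using th0_lt1 by simp
qed

lemma PN_bounds:
  assumes N: "N \<ge> k"
  shows "Im (PN N w) = 0" and "eta * wN N w \<le> Re (PN N w)" and "Re (PN N w) \<le> C2 * wN N w"
proof -
  have ims: "Im (sesq k b w w) = 0" using psd_mat_sesq[OF psd] by blast
  have re: "Re (PN N w) = Re (sesq k b w w) + 2 * Re (cnj (Ws w) * TN N w) + DN N w"
    unfolding PN_decomp[OF N] by simp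
  show "Im (PN N w) = 0" unfolding PN_decomp[OF N] using ims by simp
  have cr: "\<bar>Re (cnj (Ws w) * TN N w)\<bar> \<le> cmod (Ws w) * cmod (TN N w)"
    using abs_Re_le_cmod[of "cnj (Ws w) * TN N w"] by (simp add: norm_mult)
  have lo: "Re (sesq k b w w) \<ge> lam * nsq k w"
    unfolding lam_def using lambda_min_lower[OF psd k1] .
  have c1: "2 * cmod (Ws w) * cmod (TN N w) \<le> (cmod (Ws w))\<^sup>2 * S / th0 + th0 * DN N w"
    by (rule cross_bound[OF th0_pos])
  have wsq: "(cmod (Ws w))\<^sup>2 * S / th0 \<le> real k * nsq k w * S / th0"
    using Ws_sq[of w] S_nonneg th0_pos by (intro divide_right_mono mult_right_mono) auto
  have nn: "nsq k w \<ge> 0" by (rule nsq_nonneg)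
  have dn: "DN N w \<ge> 0" by (rule DN_nonneg)
  have "Re (PN N w) \<ge> (lam - real k * S / th0) * nsq k w + (1 - th0) * DN N w"
    using re cr lo c1 wsq by (simp add: algebra_simps)
  moreover have "(lam - real k * S / th0) * nsq k w \<ge> eta * nsq k w"
    unfolding eta_def using nn by (intro mult_right_mono) auto
  moreover have "(1 - th0) * DN N w \<ge> eta * DN N w"
    unfolding eta_def using dn by (intro mult_right_mono) auto
  ultimately show "eta * wN N w \<le> Re (PN N w)" unfolding wN_eq[OF N] by (simp add: algebra_simps)
  have c2: "2 * cmod (Ws w) * cmod (TN N w) \<le> (cmod (Ws w))\<^sup>2 * S / 1 + 1 * DN N w"
    by (rule cross_bound) simp
  have wsq2: "(cmod (Ws w))\<^sup>2 * S \<le> real k * nsq k w * S"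
    using Ws_sq[of w] S_nonneg by (intro mult_right_mono) auto
  have "Re (sesq k b w w) \<le> Bb * nsq k w"
    using sesq_bound[of w] complex_Re_le_cmod[of "sesq k b w w"] by linarith
  hence "Re (PN N w) \<le> (Bb + real k * S) * nsq k w + 2 * DN N w"
    using re cr c2 wsq2 by (simp add: algebra_simps)
  also have "\<dots> \<le> C2 * (nsq k w + DN N w)"
  proof -
    have Bb0: "Bb \<ge> 0" unfolding Bb_def by (simp add: sum_nonneg)
    have e1: "(Bb + real k * S) * DN N w \<ge> 0" using Bb0 S_nonneg dn by simp
    show ?thesis unfolding C2_def using nn e1 by (simp add: algebra_simps)
  qed
  finally show "Re (PN N w) \<le> C2 * wN N w" unfolding wN_eq[OF N] .
qed

end

lemma cnj_npow: "cnj (of_nat n powr z) = of_nat n powr cnj z"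
  by (simp add: cnj_powr)

context thm_setup
begin

definition okf :: "nat \<Rightarrow> (nat \<Rightarrow> complex) \<Rightarrow> bool" where
  "okf N x \<longleftrightarrow> (\<forall>i<N. x i \<in> half_plane \<rho>)"
definition Wv :: "nat \<Rightarrow> (nat \<Rightarrow> complex) \<Rightarrow> (nat \<Rightarrow> complex) \<Rightarrow> nat \<Rightarrow> complex" where
  "Wv N x g n = (\<Sum>i<N. g i * of_nat n powr (- cnj (x i)))"
definition Qf :: "nat \<Rightarrow> (nat \<Rightarrow> complex) \<Rightarrow> (nat \<Rightarrow> complex) \<Rightarrow> complex" where
  "Qf N x g = (\<Sum>i<N. \<Sum>j<N. cnj (g i) * g j * kappa a (x i) (x j))"
definition fin :: "(nat \<Rightarrow> complex) \<Rightarrow> bool" where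
  "fin v \<longleftrightarrow> summable (\<lambda>n. om n * (cmod (v n))\<^sup>2)"
definition nw2 :: "(nat \<Rightarrow> complex) \<Rightarrow> real" where
  "nw2 v = (\<Sum>n. om n * (cmod (v n))\<^sup>2)"

lemma cnj_Wv: "cnj (Wv N x g n) = (\<Sum>i<N. cnj (g i) * of_nat n powr (- x i))"
  unfolding Wv_def cnj_sum by (simp add: cnj_npow)

lemma PN_Suc_form:
  "(\<Sum>m<M. \<Sum>n<M. h (Suc m) (Suc n)) = (\<Sum>m=1..M. \<Sum>n=1..M. h m n)"
  by (simp add: sum.atLeast1_atMost_eq)

lemma dp_combine:
  "(\<Sum>i<N. \<Sum>j<N. cnj (g i) * g j * double_partial (dir_terms a (x i) (cnj (x j))) (M, M)) =
   PN M (Wv N x g)"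
proof -
  let ?p = "\<lambda>i m. of_nat (Suc m) powr (- x i)"
  let ?q = "\<lambda>j n. of_nat (Suc n) powr (- cnj (x j))"
  let ?A = "\<lambda>m n. a (Suc m) (Suc n)"
  have "(\<Sum>i<N. \<Sum>j<N. cnj (g i) * g j * double_partial (dir_terms a (x i) (cnj (x j))) (M, M)) =
        (\<Sum>i<N. \<Sum>j<N. \<Sum>m<M. \<Sum>n<M. cnj (g i) * g j * (?A m n * ?p i m * ?q j n))"
    unfolding double_partial_def dir_terms_def by (simp add: sum_distrib_left)
  also have "\<dots> = (\<Sum>i<N. \<Sum>m<M. \<Sum>j<N. \<Sum>n<M. cnj (g i) * g j * (?A m n * ?p i m * ?q j n))"
    by (rule sum.cong[OF refl], rule sum.swap)
  also have "\<dots> = (\<Sum>m<M. \<Sum>i<N. \<Sum>j<N. \<Sum>n<M. cnj (g i) * g j * (?A m n * ?p i m * ?q j n))"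
    by (rule sum.swap)
  also have "\<dots> = (\<Sum>m<M. \<Sum>i<N. \<Sum>n<M. \<Sum>j<N. cnj (g i) * g j * (?A m n * ?p i m * ?q j n))"
    by (rule sum.cong[OF refl], rule sum.cong[OF refl], rule sum.swap)
  also have "\<dots> = (\<Sum>m<M. \<Sum>n<M. \<Sum>i<N. \<Sum>j<N. cnj (g i) * g j * (?A m n * ?p i m * ?q j n))"
    by (rule sum.cong[OF refl], rule sum.swap)
  also have "\<dots> = (\<Sum>m<M. \<Sum>n<M. ?A m n * cnj (Wv N x g (Suc m)) * Wv N x g (Suc n))"
  proof (intro sum.cong refl)
    fix m n
    have "?A m n * ((\<Sum>i<N. cnj (g i) * ?p i m) * (\<Sum>j<N. g j * ?q j n)) =
          (\<Sum>i<N. \<Sum>j<N. ?A m n * (cnj (g i) * ?p i m * (g j * ?q j n)))"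
      by (subst sum_product) (simp only: sum_distrib_left)
    also have "\<dots> = (\<Sum>i<N. \<Sum>j<N. cnj (g i) * g j * (?A m n * ?p i m * ?q j n))"
      by (intro sum.cong refl) (simp add: mult_ac)
    finally have "(\<Sum>i<N. \<Sum>j<N. cnj (g i) * g j * (?A m n * ?p i m * ?q j n)) =
          ?A m n * ((\<Sum>i<N. cnj (g i) * ?p i m) * (\<Sum>j<N. g j * ?q j n))" by simp
    also have "\<dots> = ?A m n * cnj (Wv N x g (Suc m)) * Wv N x g (Suc n)"
      unfolding cnj_Wv by (simp only: Wv_def mult.assoc)
    finally show "(\<Sum>i<N. \<Sum>j<N. cnj (g i) * g j * (?A m n * ?p i m * ?q j n)) =
          ?A m n * cnj (Wv N x g (Suc m)) * Wv N x g (Suc n)" .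
  qed
  also have "\<dots> = PN M (Wv N x g)"
    unfolding PN_def by (rule PN_Suc_form)
  finally show ?thesis .
qed

lemma Qf_lim:
  assumes ok: "okf N x"
  shows "(\<lambda>M. PN M (Wv N x g)) \<longlonglongrightarrow> Qf N x g"
proof -
  have lim: "(\<lambda>M. double_partial (dir_terms a (x i) (cnj (x j))) (M, M)) \<longlonglongrightarrow> kappa a (x i) (x j)"
    if "i < N" "j < N" for i j
  proof -
    have "Re (x i) > \<rho>" "Re (cnj (x j)) > \<rho>" using ok that unfolding okf_def half_plane_def by auto
    thus ?thesis unfolding kappa_def by (rule regconv(3))
  qed
  have "(\<lambda>M. \<Sum>i<N. \<Sum>j<N. cnj (g i) * g j * double_partial (dir_terms a (x i) (cnj (x j))) (M, M))
        \<longlonglongrightarrow> Qf N x g"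
    unfolding Qf_def by (intro tendsto_sum tendsto_mult_left) (use lim in auto)
  thus ?thesis unfolding dp_combine .
qed

lemma wN_lim:
  assumes "fin v" shows "(\<lambda>M. wN M v) \<longlonglongrightarrow> nw2 v"
proof -
  let ?f = "\<lambda>n. om n * (cmod (v n))\<^sup>2"
  have "(\<lambda>M. sum ?f {..<M}) \<longlonglongrightarrow> nw2 v"
    unfolding nw2_def using assms unfolding fin_def by (rule summable_LIMSEQ)
  hence "(\<lambda>M. sum ?f {..<Suc M}) \<longlonglongrightarrow> nw2 v" by (rule LIMSEQ_Suc)
  moreover have "sum ?f {..<Suc M} = wN M v" for M
  proof -
    have "sum ?f {..<Suc M} = sum ?f {0..M}" by (simp add: atLeast0AtMost lessThan_Suc_atMost)
    also have "\<dots> = ?f 0 + sum ?f {Suc 0..M}" by (simp add: sum.atLeast_Suc_atMost)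
    also have "?f 0 = 0" by (simp add: om_def)
    finally show ?thesis unfolding wN_def by simp
  qed
  ultimately show ?thesis by simp
qed

lemma nw2_nonneg: "fin v \<Longrightarrow> nw2 v \<ge> 0"
  unfolding nw2_def fin_def using om_nonneg by (intro suminf_nonneg) auto

lemma Qf_bounds:
  assumes ok: "okf N x" and fw: "fin (Wv N x g)"
  shows "Im (Qf N x g) = 0" and "eta * nw2 (Wv N x g) \<le> Re (Qf N x g)"
    and "Re (Qf N x g) \<le> C2 * nw2 (Wv N x g)"
proof -
  let ?W = "Wv N x g"
  have L: "(\<lambda>M. PN M ?W) \<longlonglongrightarrow> Qf N x g" by (rule Qf_lim[OF ok])
  have evk: "\<forall>\<^sub>F M in sequentially. M \<ge> k" by (rule eventually_ge_at_top)
  have ImL: "(\<lambda>M. Im (PN M ?W)) \<longlonglongrightarrow> Im (Qf N x g)" using L by (rule tendsto_Im)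
  have "\<forall>\<^sub>F M in sequentially. Im (PN M ?W) = 0"
    using evk by eventually_elim (rule PN_bounds(1))
  hence "(\<lambda>M. 0::real) \<longlonglongrightarrow> Im (Qf N x g)" by (rule Lim_transform_eventually[OF ImL])
  thus "Im (Qf N x g) = 0" by (simp add: LIMSEQ_const_iff)
  have ReL: "(\<lambda>M. Re (PN M ?W)) \<longlonglongrightarrow> Re (Qf N x g)" using L by (rule tendsto_Re)
  have wL: "(\<lambda>M. wN M ?W) \<longlonglongrightarrow> nw2 ?W" by (rule wN_lim[OF fw])
  show "eta * nw2 ?W \<le> Re (Qf N x g)"
  proof (rule tendsto_le[OF _ ReL tendsto_mult_left[OF wL]])
    show "\<forall>\<^sub>F M in sequentially. eta * wN M ?W \<le> Re (PN M ?W)"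
      using evk by eventually_elim (rule PN_bounds(2))
  qed simp
  show "Re (Qf N x g) \<le> C2 * nw2 ?W"
  proof (rule tendsto_le[OF _ tendsto_mult_left[OF wL] ReL])
    show "\<forall>\<^sub>F M in sequentially. Re (PN M ?W) \<le> C2 * wN M ?W"
      using evk by eventually_elim (rule PN_bounds(3))
  qed simp
qed

end

context thm_setup
begin

lemma om_le: "om n \<le> 1 + \<bar>d n\<bar>" unfolding om_def by auto

lemma fin_Wv:
  assumes ok: "okf N x" shows "fin (Wv N x g)"
proof -
  define \<sigma>0 where "\<sigma>0 = Min (insert (\<rho> + 1) ((\<lambda>i. Re (x i)) ` {..<N}))"
  have fs: "finite (insert (\<rho> + 1) ((\<lambda>i. Re (x i)) ` {..<N}))" by simp
  have s0: "\<sigma>0 > \<rho>"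
    unfolding \<sigma>0_def using ok unfolding okf_def half_plane_def
    by (subst Min_gr_iff[OF fs]) auto
  have s0le: "\<sigma>0 \<le> Re (x i)" if "i < N" for i
    unfolding \<sigma>0_def using that by (intro Min_le[OF fs]) auto
  define G where "G = (\<Sum>i<N. cmod (g i))"
  have G0: "G \<ge> 0" unfolding G_def by (simp add: sum_nonneg)
  have Wb: "cmod (Wv N x g n) \<le> G * real n powr (- \<sigma>0)" if n: "n \<ge> 1" for n
  proof -
    have "cmod (Wv N x g n) \<le> (\<Sum>i<N. cmod (g i * of_nat n powr (- cnj (x i))))"
      unfolding Wv_def by (rule norm_sum)
    also have "\<dots> \<le> (\<Sum>i<N. cmod (g i) * real n powr (- \<sigma>0))"
    proof (intro sum_mono)
      fix i assume i: "i \<in> {..<N}"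
      have "cmod (of_nat n powr (- cnj (x i))) = real n powr (- Re (x i))"
        using norm_npow[of n "cnj (x i)"] by simp
      also have "\<dots> \<le> real n powr (- \<sigma>0)" using s0le[of i] i n by (intro powr_mono) auto
      finally show "cmod (g i * of_nat n powr (- cnj (x i))) \<le> cmod (g i) * real n powr (- \<sigma>0)"
        unfolding norm_mult by (intro mult_left_mono) auto
    qed
    also have "\<dots> = G * real n powr (- \<sigma>0)" unfolding G_def by (simp add: sum_distrib_right)
    finally show ?thesis .
  qed
  have bnd: "norm (om n * (cmod (Wv N x g n))\<^sup>2) \<le> G\<^sup>2 * (real n powr (- (2 * \<sigma>0)) + \<bar>d n\<bar> * real n powr (- (2 * \<sigma>0)))" for n
  proof (cases "n = 0")
    case True thus ?thesis by (simp add: om_def)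
  next
    case False
    hence n: "n \<ge> 1" by simp
    have sq: "(cmod (Wv N x g n))\<^sup>2 \<le> G\<^sup>2 * real n powr (- (2 * \<sigma>0))"
    proof -
      have "(cmod (Wv N x g n))\<^sup>2 \<le> (G * real n powr (- \<sigma>0))\<^sup>2" using Wb[OF n] by (intro power_mono) auto
      also have "\<dots> = G\<^sup>2 * real n powr (- (2 * \<sigma>0))"
        by (simp add: power_mult_distrib powr_powr[symmetric] power2_eq_square powr_add[symmetric])
      finally show ?thesis .
    qed
    have "norm (om n * (cmod (Wv N x g n))\<^sup>2) = om n * (cmod (Wv N x g n))\<^sup>2" using om_nonneg by simp
    also have "\<dots> \<le> (1 + \<bar>d n\<bar>) * (G\<^sup>2 * real n powr (- (2 * \<sigma>0)))"
      using om_le om_nonneg sq by (intro mult_mono) auto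
    also have "\<dots> = G\<^sup>2 * (real n powr (- (2 * \<sigma>0)) + \<bar>d n\<bar> * real n powr (- (2 * \<sigma>0)))"
      by (simp add: algebra_simps)
    finally show ?thesis .
  qed
  have "summable (\<lambda>n. G\<^sup>2 * (real n powr (- (2 * \<sigma>0)) + \<bar>d n\<bar> * real n powr (- (2 * \<sigma>0))))"
  proof (intro summable_mult summable_add)
    show "summable (\<lambda>n. real n powr (- (2 * \<sigma>0)))" using s0 rho1 by (simp add: summable_real_powr_iff)
    show "summable (\<lambda>n. \<bar>d n\<bar> * real n powr (- (2 * \<sigma>0)))" using s0 rho1 by (intro d_summable) auto
  qed
  thus ?thesis unfolding fin_def using bnd by (rule summable_comparison_test'[where N=0])
qed

lemma Qf_psd: "okf N x \<Longrightarrow> Im (Qf N x g) = 0 \<and> Re (Qf N x g) \<ge> eta * nw2 (Wv N x g)"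
  using Qf_bounds[OF _ fin_Wv] by blast

lemma kernel_part2: "psd_kernel (kappa a) (half_plane \<rho>)"
  unfolding psd_kernel_def Let_def
proof (intro allI impI)
  fix N :: nat and x g :: "nat \<Rightarrow> complex" assume "\<forall>i<N. x i \<in> half_plane \<rho>"
  hence ok: "okf N x" unfolding okf_def .
  have "eta * nw2 (Wv N x g) \<ge> 0" using eta_pos nw2_nonneg[OF fin_Wv[OF ok]] by simp
  thus "Im (\<Sum>i<N. \<Sum>j<N. cnj (g i) * g j * kappa a (x i) (x j)) = 0 \<and>
        0 \<le> Re (\<Sum>i<N. \<Sum>j<N. cnj (g i) * g j * kappa a (x i) (x j))"
    using Qf_psd[OF ok, of g] unfolding Qf_def by linarith
qed

end

context thm_setup
begin

lemma part3: "n \<ge> k + 1 \<Longrightarrow> is_dirichlet_poly (analytic_symbol a n)"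
proof -
  assume n: "n \<ge> k + 1"
  have "analytic_symbol a n = dirichlet_poly n (\<lambda>j. a j n)"
  proof
    fix s
    have "analytic_symbol a n s = (\<Sum>m<n. a (Suc m) n * of_nat (Suc m) powr (- s))"
      unfolding analytic_symbol_def
      by (rule suminf_finite) (use n in \<open>auto simp: block_mat_def\<close>)
    also have "\<dots> = dirichlet_poly n (\<lambda>j. a j n) s"
      unfolding dirichlet_poly_def by (simp add: sum.atLeast1_atMost_eq)
    finally show "analytic_symbol a n s = dirichlet_poly n (\<lambda>j. a j n) s" .
  qed
  thus ?thesis unfolding is_dirichlet_poly_def by blast
qed

definition Lv :: "(complex \<Rightarrow> complex) \<Rightarrow> nat \<Rightarrow> (nat \<Rightarrow> complex) \<Rightarrow> (nat \<Rightarrow> complex) \<Rightarrow> complex" where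
  "Lv f N x g = (\<Sum>i<N. cnj (g i) * f (x i))"

lemma Lv_dpoly: "Lv (dirichlet_poly M cc) N x g = (\<Sum>n=1..M. cc n * cnj (Wv N x g n))"
proof -
  have "Lv (dirichlet_poly M cc) N x g = (\<Sum>i<N. \<Sum>n=1..M. cc n * (cnj (g i) * of_nat n powr (- x i)))"
    unfolding Lv_def dirichlet_poly_def sum_distrib_left by (intro sum.cong refl) (simp add: mult_ac)
  also have "\<dots> = (\<Sum>n=1..M. \<Sum>i<N. cc n * (cnj (g i) * of_nat n powr (- x i)))" by (rule sum.swap)
  also have "\<dots> = (\<Sum>n=1..M. cc n * cnj (Wv N x g n))"
    unfolding cnj_Wv sum_distrib_left ..
  finally show ?thesis .
qed

lemma fin_CS:
  assumes F: "finite F" and pos: "\<And>n. n \<in> F \<Longrightarrow> om n > 0"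
  shows "cmod (\<Sum>n\<in>F. cc n * cnj (w n)) \<le>
         sqrt (\<Sum>n\<in>F. (cmod (cc n))\<^sup>2 / om n) * sqrt (\<Sum>n\<in>F. om n * (cmod (w n))\<^sup>2)"
proof -
  let ?f = "\<lambda>n. cmod (cc n) / sqrt (om n)"
  let ?g = "\<lambda>n. sqrt (om n) * cmod (w n)"
  have "cmod (\<Sum>n\<in>F. cc n * cnj (w n)) \<le> (\<Sum>n\<in>F. cmod (cc n) * cmod (w n))"
    by (rule order.trans[OF norm_sum]) (simp add: norm_mult)
  also have "\<dots> = (\<Sum>n\<in>F. \<bar>?f n\<bar> * \<bar>?g n\<bar>)"
  proof (intro sum.cong refl)
    fix n assume "n \<in> F"
    hence "om n > 0" by (rule pos)
    thus "cmod (cc n) * cmod (w n) = \<bar>?f n\<bar> * \<bar>?g n\<bar>" by (simp add: abs_mult)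
  qed
  also have "\<dots> \<le> L2_set ?f F * L2_set ?g F" by (rule L2_set_mult_ineq)
  also have "L2_set ?f F = sqrt (\<Sum>n\<in>F. (cmod (cc n))\<^sup>2 / om n)"
    unfolding L2_set_def using pos by (intro arg_cong[where f=sqrt] sum.cong refl)
      (simp add: power_divide less_imp_le)
  also have "L2_set ?g F = sqrt (\<Sum>n\<in>F. om n * (cmod (w n))\<^sup>2)"
    unfolding L2_set_def using pos by (intro arg_cong[where f=sqrt] sum.cong refl)
      (simp add: power_mult_distrib less_imp_le)
  finally show ?thesis .
qed

lemma partial_le_nw2: "fin w \<Longrightarrow> (\<Sum>n\<in>F. om n * (cmod (w n))\<^sup>2) \<le> nw2 w" if "finite F"
  unfolding nw2_def fin_def using that om_nonneg by (intro sum_le_suminf) auto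

lemma rkhs_bound_iff:
  "rkhs_bound (kappa a) (half_plane \<rho>) f C \<longleftrightarrow> C \<ge> 0 \<and>
     (\<forall>N x g. okf N x \<longrightarrow> (cmod (Lv f N x g))\<^sup>2 \<le> C * Re (Qf N x g))"
  unfolding rkhs_bound_def okf_def Lv_def Qf_def by blast

lemma dpoly_bound:
  assumes ok: "okf N x"
  shows "(cmod (Lv (dirichlet_poly M cc) N x g))\<^sup>2 \<le> (\<Sum>n=1..M. (cmod (cc n))\<^sup>2 / om n) * nw2 (Wv N x g)"
proof -
  let ?W = "Wv N x g"
  have "cmod (Lv (dirichlet_poly M cc) N x g) \<le>
        sqrt (\<Sum>n=1..M. (cmod (cc n))\<^sup>2 / om n) * sqrt (\<Sum>n=1..M. om n * (cmod (?W n))\<^sup>2)"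
    unfolding Lv_dpoly by (rule fin_CS) (auto intro: om_pos)
  hence "(cmod (Lv (dirichlet_poly M cc) N x g))\<^sup>2 \<le>
        (sqrt (\<Sum>n=1..M. (cmod (cc n))\<^sup>2 / om n) * sqrt (\<Sum>n=1..M. om n * (cmod (?W n))\<^sup>2))\<^sup>2"
    by (intro power_mono) auto
  also have "\<dots> = (\<Sum>n=1..M. (cmod (cc n))\<^sup>2 / om n) * (\<Sum>n=1..M. om n * (cmod (?W n))\<^sup>2)"
    using om_nonneg by (simp add: power_mult_distrib sum_nonneg)
  also have "\<dots> \<le> (\<Sum>n=1..M. (cmod (cc n))\<^sup>2 / om n) * nw2 ?W"
    using om_nonneg by (intro mult_left_mono partial_le_nw2 fin_Wv ok) (auto intro: sum_nonneg)
  finally show ?thesis .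
qed

lemma part4: "is_dirichlet_poly p \<Longrightarrow> in_rkhs (kappa a) (half_plane \<rho>) p"
proof -
  assume "is_dirichlet_poly p"
  then obtain M cc where p: "p = dirichlet_poly M cc" unfolding is_dirichlet_poly_def by blast
  define Cp where "Cp = (\<Sum>n=1..M. (cmod (cc n))\<^sup>2 / om n)"
  have Cp0: "Cp \<ge> 0" unfolding Cp_def using om_nonneg by (intro sum_nonneg) auto
  have "rkhs_bound (kappa a) (half_plane \<rho>) p (Cp / eta)"
    unfolding rkhs_bound_iff
  proof (intro conjI allI impI)
    show "Cp / eta \<ge> 0" using Cp0 eta_pos by simp
    fix N x g assume ok: "okf N x"
    have "(cmod (Lv p N x g))\<^sup>2 \<le> Cp * nw2 (Wv N x g)" unfolding p Cp_def by (rule dpoly_bound[OF ok])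
    also have "\<dots> \<le> Cp * (Re (Qf N x g) / eta)"
    proof (intro mult_left_mono Cp0)
      have "eta * nw2 (Wv N x g) \<le> Re (Qf N x g)" using Qf_psd[OF ok] by blast
      thus "nw2 (Wv N x g) \<le> Re (Qf N x g) / eta" using eta_pos by (simp add: field_simps)
    qed
    also have "\<dots> = Cp / eta * Re (Qf N x g)" by simp
    finally show "(cmod (Lv p N x g))\<^sup>2 \<le> Cp / eta * Re (Qf N x g)" .
  qed
  thus ?thesis unfolding in_rkhs_def by blast
qed

end

lemma sum_lessThan_add_nat:
  fixes N1 N2 :: nat
  shows "(\<Sum>i<N1 + N2. h i) = (\<Sum>i<N1. h i) + (\<Sum>i<N2. h (N1 + i))"
  by (induction N2) (simp_all add: add_ac)

lemma sq_sum_le: "(cmod (p + q))\<^sup>2 \<le> 2 * (cmod p)\<^sup>2 + 2 * (cmod q)\<^sup>2"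
proof -
  have "(cmod (p + q))\<^sup>2 \<le> (cmod p + cmod q)\<^sup>2" by (intro power_mono norm_triangle_ineq) auto
  also have "\<dots> \<le> 2 * (cmod p)\<^sup>2 + 2 * (cmod q)\<^sup>2"
    using power2_diff[of "cmod p" "cmod q"] zero_le_power2[of "cmod p - cmod q"]
    by (simp add: power2_sum)
  finally show ?thesis .
qed

context thm_setup
begin

definition nw :: "(nat \<Rightarrow> complex) \<Rightarrow> real" where "nw v = sqrt (nw2 v)"

lemma nw_nonneg: "fin v \<Longrightarrow> nw v \<ge> 0" unfolding nw_def using nw2_nonneg by simp

lemma fin_add: "fin v \<Longrightarrow> fin w \<Longrightarrow> fin (\<lambda>n. v n + w n)"
  unfolding fin_def
proof -
  assume sv: "summable (\<lambda>n. om n * (cmod (v n))\<^sup>2)" and sw: "summable (\<lambda>n. om n * (cmod (w n))\<^sup>2)"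
  have "summable (\<lambda>n. 2 * (om n * (cmod (v n))\<^sup>2) + 2 * (om n * (cmod (w n))\<^sup>2))"
    using sv sw by (intro summable_add summable_mult)
  moreover have "norm (om n * (cmod (v n + w n))\<^sup>2) \<le> 2 * (om n * (cmod (v n))\<^sup>2) + 2 * (om n * (cmod (w n))\<^sup>2)" for n
  proof -
    have "om n * (cmod (v n + w n))\<^sup>2 \<le> om n * (2 * (cmod (v n))\<^sup>2 + 2 * (cmod (w n))\<^sup>2)"
      using om_nonneg by (intro mult_left_mono sq_sum_le) auto
    thus ?thesis using om_nonneg by (simp add: algebra_simps)
  qed
  ultimately show "summable (\<lambda>n. om n * (cmod (v n + w n))\<^sup>2)"
    by (rule summable_comparison_test'[where N=0])
qed

lemma fin_scale: "fin v \<Longrightarrow> fin (\<lambda>n. \<alpha> * v n)"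
  unfolding fin_def
proof -
  assume "summable (\<lambda>n. om n * (cmod (v n))\<^sup>2)"
  hence "summable (\<lambda>n. (cmod \<alpha>)\<^sup>2 * (om n * (cmod (v n))\<^sup>2))" by (rule summable_mult)
  thus "summable (\<lambda>n. om n * (cmod (\<alpha> * v n))\<^sup>2)" by (simp add: norm_mult power_mult_distrib mult_ac)
qed

lemma fin_diff: "fin v \<Longrightarrow> fin w \<Longrightarrow> fin (\<lambda>n. v n - w n)"
  using fin_add[of v "\<lambda>n. (-1) * w n"] fin_scale[of w "-1"] by simp

lemma fin_zero: "fin (\<lambda>n. 0)" unfolding fin_def by simp

lemma fin_finite: "(\<And>n. n > M \<Longrightarrow> v n = 0) \<Longrightarrow> fin v"
  unfolding fin_def by (rule summable_finite[of "{..M}"]) auto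

lemma fin_sum: "finite F \<Longrightarrow> (\<And>j. j \<in> F \<Longrightarrow> fin (h j)) \<Longrightarrow> fin (\<lambda>n. \<Sum>j\<in>F. h j n)"
proof (induction F rule: finite_induct)
  case empty thus ?case using fin_zero by simp
next
  case (insert j F)
  thus ?case using fin_add[of "h j" "\<lambda>n. \<Sum>j\<in>F. h j n"] by simp
qed

lemma nw2_scale: "fin v \<Longrightarrow> nw2 (\<lambda>n. \<alpha> * v n) = (cmod \<alpha>)\<^sup>2 * nw2 v"
  unfolding nw2_def fin_def
  by (subst suminf_mult[symmetric]) (auto simp: norm_mult power_mult_distrib mult_ac)

lemma nw_scale: "fin v \<Longrightarrow> nw (\<lambda>n. \<alpha> * v n) = cmod \<alpha> * nw v"
  unfolding nw_def nw2_scale by (simp add: real_sqrt_mult)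

lemma nw_zero: "nw (\<lambda>n. 0) = 0" unfolding nw_def nw2_def by simp

lemma nw_triangle:
  assumes fv: "fin v" and fw: "fin w"
  shows "nw (\<lambda>n. v n + w n) \<le> nw v + nw w"
proof -
  let ?ps = "\<lambda>u M. (\<Sum>n<M. om n * (cmod (u n))\<^sup>2)"
  have lim: "(\<lambda>M. sqrt (?ps u M)) \<longlonglongrightarrow> nw u" if "fin u" for u
    unfolding nw_def nw2_def using that unfolding fin_def
    by (intro tendsto_real_sqrt summable_LIMSEQ)
  have L2eq: "sqrt (?ps u M) = L2_set (\<lambda>n. sqrt (om n) * cmod (u n)) {..<M}" for u M
    unfolding L2_set_def using om_nonneg by (simp add: power_mult_distrib)
  have ps_le: "sqrt (?ps u M) \<le> nw u" if "fin u" for u M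
  proof -
    have "?ps u M \<le> nw2 u" unfolding nw2_def using that om_nonneg unfolding fin_def
      by (intro sum_le_suminf) auto
    thus ?thesis unfolding nw_def by simp
  qed
  have "sqrt (?ps (\<lambda>n. v n + w n) M) \<le> nw v + nw w" for M
  proof -
    have "sqrt (?ps (\<lambda>n. v n + w n) M) = L2_set (\<lambda>n. sqrt (om n) * cmod (v n + w n)) {..<M}"
      by (rule L2eq)
    also have "\<dots> \<le> L2_set (\<lambda>n. sqrt (om n) * cmod (v n) + sqrt (om n) * cmod (w n)) {..<M}"
      using om_nonneg by (intro L2_set_mono) (auto simp: distrib_left[symmetric] intro!: mult_left_mono norm_triangle_ineq)
    also have "\<dots> \<le> L2_set (\<lambda>n. sqrt (om n) * cmod (v n)) {..<M} + L2_set (\<lambda>n. sqrt (om n) * cmod (w n)) {..<M}"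
      by (rule L2_set_triangle_ineq)
    also have "\<dots> \<le> nw v + nw w" using ps_le[OF fv, of M] ps_le[OF fw, of M] unfolding L2eq by simp
    finally show ?thesis .
  qed
  thus ?thesis using lim[OF fin_add[OF fv fw]]
    by (intro tendsto_le[OF _ tendsto_const]) auto
qed

lemma nw_triangle_diff:
  assumes "fin u" "fin v" "fin w"
  shows "nw (\<lambda>n. u n - w n) \<le> nw (\<lambda>n. u n - v n) + nw (\<lambda>n. v n - w n)"
  using nw_triangle[OF fin_diff[OF assms(1,2)] fin_diff[OF assms(2,3)]] by simp

lemma nw_commute: "fin u \<Longrightarrow> fin v \<Longrightarrow> nw (\<lambda>n. u n - v n) = nw (\<lambda>n. v n - u n)"
  using nw_scale[OF fin_diff, of u v "-1"] by simp

end

context thm_setup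
begin

definition catx :: "nat \<Rightarrow> (nat \<Rightarrow> complex) \<Rightarrow> (nat \<Rightarrow> complex) \<Rightarrow> nat \<Rightarrow> complex" where
  "catx N1 x1 x2 = (\<lambda>i. if i < N1 then x1 i else x2 (i - N1))"

lemma okf_cat: "okf N1 x1 \<Longrightarrow> okf N2 x2 \<Longrightarrow> okf (N1 + N2) (catx N1 x1 x2)"
  unfolding okf_def catx_def by auto

lemma Wv_cat: "Wv (N1 + N2) (catx N1 x1 x2) (catx N1 g1 g2) n = Wv N1 x1 g1 n + Wv N2 x2 g2 n"
  unfolding Wv_def sum_lessThan_add_nat catx_def by simp

lemma Lv_cat: "Lv f (N1 + N2) (catx N1 x1 x2) (catx N1 g1 g2) = Lv f N1 x1 g1 + Lv f N2 x2 g2"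
  unfolding Lv_def sum_lessThan_add_nat catx_def by simp

lemma Wv_scale: "Wv N x (\<lambda>i. \<alpha> * g i) n = \<alpha> * Wv N x g n"
  unfolding Wv_def sum_distrib_left by (simp add: mult_ac)

lemma Lv_scale: "Lv f N x (\<lambda>i. \<alpha> * g i) = cnj \<alpha> * Lv f N x g"
  unfolding Lv_def sum_distrib_left by (simp add: mult_ac)

lemma Wv_empty: "Wv 0 x g n = 0" unfolding Wv_def by simp
lemma Lv_empty: "Lv f 0 x g = 0" unfolding Lv_def by simp
lemma okf_empty: "okf 0 x" unfolding okf_def by simp

definition Apx :: "(nat \<Rightarrow> complex) \<Rightarrow> bool" where
  "Apx v \<longleftrightarrow> fin v \<and> (\<forall>\<epsilon>>0. \<exists>N x g. okf N x \<and> nw (\<lambda>n. Wv N x g n - v n) < \<epsilon>)"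

lemma Apx_fin: "Apx v \<Longrightarrow> fin v" unfolding Apx_def by blast

lemma Apx_Wv: assumes o: "okf N x" shows "Apx (Wv N x g)"
  unfolding Apx_def
proof (intro conjI allI impI)
  show "fin (Wv N x g)" using o by (rule fin_Wv)
  fix \<epsilon> :: real assume e: "\<epsilon> > 0"
  have "nw (\<lambda>n. Wv N x g n - Wv N x g n) < \<epsilon>" using nw_zero e by simp
  thus "\<exists>N' x' g'. okf N' x' \<and> nw (\<lambda>n. Wv N' x' g' n - Wv N x g n) < \<epsilon>" using o by blast
qed

lemma Apx_add:
  assumes av: "Apx v" and aw: "Apx w"
  shows "Apx (\<lambda>n. v n + w n)"
  unfolding Apx_def
proof (intro conjI allI impI)
  have fv: "fin v" and fw: "fin w" using av aw by (auto dest: Apx_fin)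
  show "fin (\<lambda>n. v n + w n)" using fin_add[OF fv fw] .
  fix \<epsilon> :: real assume e: "\<epsilon> > 0"
  obtain N1 x1 g1 where o1: "okf N1 x1" and n1: "nw (\<lambda>n. Wv N1 x1 g1 n - v n) < \<epsilon> / 2"
    using av e unfolding Apx_def by (meson half_gt_zero)
  obtain N2 x2 g2 where o2: "okf N2 x2" and n2: "nw (\<lambda>n. Wv N2 x2 g2 n - w n) < \<epsilon> / 2"
    using aw e unfolding Apx_def by (meson half_gt_zero)
  have "nw (\<lambda>n. Wv (N1 + N2) (catx N1 x1 x2) (catx N1 g1 g2) n - (v n + w n)) =
        nw (\<lambda>n. (Wv N1 x1 g1 n - v n) + (Wv N2 x2 g2 n - w n))"
    unfolding Wv_cat by (simp add: algebra_simps)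
  also have "\<dots> \<le> nw (\<lambda>n. Wv N1 x1 g1 n - v n) + nw (\<lambda>n. Wv N2 x2 g2 n - w n)"
    by (intro nw_triangle fin_diff fin_Wv o1 o2 fv fw)
  also have "\<dots> < \<epsilon>" using n1 n2 by simp
  finally show "\<exists>N x g. okf N x \<and> nw (\<lambda>n. Wv N x g n - (v n + w n)) < \<epsilon>"
    using okf_cat[OF o1 o2] by blast
qed

lemma Apx_zero: "Apx (\<lambda>n. 0)"
  using Apx_Wv[OF okf_empty, of "\<lambda>_. 0" "\<lambda>_. 0"] unfolding Wv_empty by simp

lemma Apx_scale:
  assumes av: "Apx v" shows "Apx (\<lambda>n. \<alpha> * v n)"
proof (cases "\<alpha> = 0")
  case True thus ?thesis using Apx_zero by simp
next
  case False
  have fv: "fin v" using av by (rule Apx_fin)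
  show ?thesis unfolding Apx_def
  proof (intro conjI allI impI)
    show "fin (\<lambda>n. \<alpha> * v n)" using fv by (rule fin_scale)
    fix \<epsilon> :: real assume e: "\<epsilon> > 0"
    have "\<epsilon> / cmod \<alpha> > 0" using e False by simp
    then obtain N x g where o: "okf N x" and n: "nw (\<lambda>n. Wv N x g n - v n) < \<epsilon> / cmod \<alpha>"
      using av unfolding Apx_def by blast
    have "nw (\<lambda>n. Wv N x (\<lambda>i. \<alpha> * g i) n - \<alpha> * v n) = nw (\<lambda>n. \<alpha> * (Wv N x g n - v n))"
      unfolding Wv_scale by (simp add: algebra_simps)
    also have "\<dots> = cmod \<alpha> * nw (\<lambda>n. Wv N x g n - v n)"
      by (intro nw_scale fin_diff fin_Wv o fv)
    also have "\<dots> < \<epsilon>" using n False by (simp add: field_simps)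
    finally show "\<exists>N x g. okf N x \<and> nw (\<lambda>n. Wv N x g n - \<alpha> * v n) < \<epsilon>" using o by blast
  qed
qed

lemma Apx_sum: "finite F \<Longrightarrow> (\<And>j. j \<in> F \<Longrightarrow> Apx (h j)) \<Longrightarrow> Apx (\<lambda>n. \<Sum>j\<in>F. h j n)"
proof (induction F rule: finite_induct)
  case empty thus ?case using Apx_zero by simp
next
  case (insert j F)
  thus ?case using Apx_add[of "h j" "\<lambda>n. \<Sum>j\<in>F. h j n"] by simp
qed

lemma Apx_closed:
  assumes fv: "fin v" and ap: "\<And>\<epsilon>. \<epsilon> > 0 \<Longrightarrow> \<exists>w. Apx w \<and> nw (\<lambda>n. w n - v n) < \<epsilon>"
  shows "Apx v"
  unfolding Apx_def
proof (intro conjI allI impI fv)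
  fix \<epsilon> :: real assume e: "\<epsilon> > 0"
  obtain w where aw: "Apx w" and nwv: "nw (\<lambda>n. w n - v n) < \<epsilon> / 2" using ap[of "\<epsilon>/2"] e by auto
  obtain N x g where o: "okf N x" and n: "nw (\<lambda>n. Wv N x g n - w n) < \<epsilon> / 2"
    using aw e unfolding Apx_def by (meson half_gt_zero)
  have "nw (\<lambda>n. Wv N x g n - v n) \<le> nw (\<lambda>n. Wv N x g n - w n) + nw (\<lambda>n. w n - v n)"
    by (intro nw_triangle_diff fin_Wv o fv Apx_fin aw)
  also have "\<dots> < \<epsilon>" using n nwv by simp
  finally show "\<exists>N x g. okf N x \<and> nw (\<lambda>n. Wv N x g n - v n) < \<epsilon>" using o by blast
qed

end

lemma npow_real: "(of_nat m :: complex) powr (- complex_of_real s) = complex_of_real (real m powr (- s))"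
proof -
  have "(of_nat m :: complex) powr (- complex_of_real s) = complex_of_real (real m) powr complex_of_real (- s)"
    by simp
  also have "\<dots> = complex_of_real (real m powr (- s))" by (rule powr_of_real) simp
  finally show ?thesis .
qed

context thm_setup
begin

definition ev :: "nat \<Rightarrow> nat \<Rightarrow> complex" where "ev n = (\<lambda>m. if m = n then 1 else 0)"

lemma fin_ev: "fin (ev n)" unfolding ev_def by (rule fin_finite[of n]) auto

lemma Apx_ev: "n \<ge> 1 \<Longrightarrow> Apx (ev n)"
proof (induction n rule: less_induct)
  case (less n)
  hence n1: "n \<ge> 1" and IH: "\<And>i. i < n \<Longrightarrow> i \<ge> 1 \<Longrightarrow> Apx (ev i)" by auto
  define \<sigma>1 where "\<sigma>1 = \<rho> + 1"
  define sg where "sg j = \<sigma>1 + real j" for j :: nat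
  define E where "E j = Wv 1 (\<lambda>_. complex_of_real (sg j)) (\<lambda>_. 1)" for j
  define V where "V j = (\<lambda>m. complex_of_real (real n powr sg j) *
      (E j m + (-1) * (\<Sum>i\<in>{1..<n}. complex_of_real (real i powr (- sg j)) * ev i m)))" for j
  have okE: "okf 1 (\<lambda>_. complex_of_real (sg j))" for j
    unfolding okf_def half_plane_def sg_def \<sigma>1_def by simp
  have E_eq: "E j m = complex_of_real (real m powr (- sg j))" for j m
    unfolding E_def Wv_def by (simp add: npow_real)
  have apxE: "Apx (E j)" for j unfolding E_def by (rule Apx_Wv[OF okE])
  have apxV: "Apx (V j)" for j
    unfolding V_def
    by (intro Apx_scale Apx_add Apx_sum apxE) (auto intro: IH)
  define t where "t m = real n / real m" for m
  define q where "q = (real n / real (Suc n))\<^sup>2"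
  have R_eq: "V j m - ev n m = (if m > n then complex_of_real (t m powr sg j) else 0)" for j m
  proof -
    consider "m = 0" | "m \<ge> 1" "m < n" | "m = n" | "m > n" by linarith
    thus ?thesis
    proof cases
      case 1
      have "E j 0 = 0" unfolding E_eq by simp
      moreover have "ev i 0 = 0" if "i \<in> {1..<n}" for i using that by (simp add: ev_def)
      ultimately show ?thesis using 1 n1 unfolding V_def by (simp add: ev_def)
    next
      case 2
      have "(\<Sum>i\<in>{1..<n}. complex_of_real (real i powr (- sg j)) * ev i m) =
            (\<Sum>i\<in>{1..<n}. if i = m then complex_of_real (real i powr (- sg j)) else 0)"
        by (intro sum.cong refl) (auto simp: ev_def)
      also have "\<dots> = complex_of_real (real m powr (- sg j))" using 2 by (simp add: sum.delta')
      finally have "(\<Sum>i\<in>{1..<n}. complex_of_real (real i powr (- sg j)) * ev i m) = complex_of_real (real m powr (- sg j))" .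
      thus ?thesis using 2 unfolding V_def E_eq by (simp add: ev_def)
    next
      case 3
      have "(\<Sum>i\<in>{1..<n}. complex_of_real (real i powr (- sg j)) * ev i m) = 0"
        unfolding ev_def using 3 by (intro sum.neutral) auto
      moreover have "real n powr sg j * real n powr (- sg j) = 1"
        using n1 by (simp add: powr_add[symmetric])
      ultimately show ?thesis using 3 unfolding V_def E_eq
        by (simp add: ev_def of_real_mult[symmetric] del: of_real_mult)
    next
      case 4
      have "(\<Sum>i\<in>{1..<n}. complex_of_real (real i powr (- sg j)) * ev i m) = 0"
        unfolding ev_def using 4 by (intro sum.neutral) auto
      moreover have "real n powr sg j * real m powr (- sg j) = t m powr sg j"
        unfolding t_def powr_divide powr_minus by (simp add: divide_inverse)
      ultimately show ?thesis using 4 unfolding V_def E_eq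
        by (simp add: ev_def of_real_mult[symmetric] del: of_real_mult)
    qed
  qed
  define Zt where "Zt m = (if m > n then om m * t m powr (2 * \<sigma>1) else 0)" for m
  have Zt_nonneg: "Zt m \<ge> 0" for m unfolding Zt_def t_def using om_nonneg by simp
  have Zt_sum: "summable Zt"
  proof (rule summable_comparison_test'[where N=0])
    show "summable (\<lambda>m. real n powr (2 * \<sigma>1) * (real m powr (- (2 * \<sigma>1)) + \<bar>d m\<bar> * real m powr (- (2 * \<sigma>1))))"
      using rho1 unfolding \<sigma>1_def
      by (intro summable_mult summable_add d_summable) (auto simp: summable_real_powr_iff)
    fix m
    show "norm (Zt m) \<le> real n powr (2 * \<sigma>1) * (real m powr (- (2 * \<sigma>1)) + \<bar>d m\<bar> * real m powr (- (2 * \<sigma>1)))"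
    proof (cases "m > n")
      case True
      have "t m powr (2 * \<sigma>1) = real n powr (2 * \<sigma>1) * real m powr (- (2 * \<sigma>1))"
        unfolding t_def powr_divide powr_minus by (simp add: divide_inverse)
      hence "Zt m = om m * (real n powr (2 * \<sigma>1) * real m powr (- (2 * \<sigma>1)))"
        unfolding Zt_def using True by simp
      also have "\<dots> \<le> (1 + \<bar>d m\<bar>) * (real n powr (2 * \<sigma>1) * real m powr (- (2 * \<sigma>1)))"
        by (intro mult_right_mono om_le) auto
      finally show ?thesis using Zt_nonneg[of m] by (simp add: algebra_simps)
    next
      case False thus ?thesis unfolding Zt_def by simp
    qed
  qed
  have q0: "q \<ge> 0" and q1: "q < 1" unfolding q_def using n1 by (auto simp: power_less_one_iff divide_less_eq)
  have Rb: "om m * (cmod (V j m - ev n m))\<^sup>2 \<le> q ^ j * Zt m" for j m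
  proof (cases "m > n")
    case True
    have tp: "t m > 0" unfolding t_def using True n1 by simp
    have tle: "t m \<le> real n / real (Suc n)" unfolding t_def using True n1 by (intro divide_left_mono) auto
    have "(cmod (V j m - ev n m))\<^sup>2 = (t m powr sg j)\<^sup>2" unfolding R_eq using True tp by simp
    also have "\<dots> = t m powr (2 * \<sigma>1) * (t m ^ 2) ^ j"
    proof -
      have "(t m powr sg j)\<^sup>2 = t m powr (2 * sg j)"
        by (simp add: power2_eq_square powr_add[symmetric])
      also have "\<dots> = t m powr (2 * \<sigma>1) * t m powr (2 * real j)"
        unfolding sg_def by (simp add: powr_add[symmetric] algebra_simps)
      also have "t m powr (2 * real j) = (t m ^ 2) ^ j"
      proof -
        have "t m powr (2 * real j) = (t m powr 2) powr real j" by (simp add: powr_powr)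
        also have "t m powr 2 = (t m)\<^sup>2" using tp by simp
        also have "((t m)\<^sup>2) powr real j = ((t m)\<^sup>2) ^ j" using tp by (intro powr_realpow) simp
        finally show ?thesis .
      qed
      finally show ?thesis .
    qed
    also have "\<dots> \<le> t m powr (2 * \<sigma>1) * q ^ j"
      unfolding q_def using tp tle by (intro mult_left_mono power_mono) auto
    finally have "om m * (cmod (V j m - ev n m))\<^sup>2 \<le> om m * (t m powr (2 * \<sigma>1) * q ^ j)"
      using om_nonneg by (intro mult_left_mono) auto
    thus ?thesis unfolding Zt_def using True by (simp add: mult_ac)
  next
    case False thus ?thesis unfolding R_eq Zt_def by simp
  qed
  have finR: "fin (\<lambda>m. V j m - ev n m)" for j
    unfolding fin_def
    by (rule summable_comparison_test'[where N=0, OF summable_mult[OF Zt_sum, of "q ^ j"]])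
       (use Rb om_nonneg in simp)
  have nwR: "nw2 (\<lambda>m. V j m - ev n m) \<le> q ^ j * suminf Zt" for j
  proof -
    have "nw2 (\<lambda>m. V j m - ev n m) \<le> (\<Sum>m. q ^ j * Zt m)"
      unfolding nw2_def using finR[of j] Rb unfolding fin_def
      by (intro suminf_le summable_mult Zt_sum) auto
    thus ?thesis by (simp add: suminf_mult Zt_sum)
  qed
  show ?case
  proof (rule Apx_closed[OF fin_ev])
    fix \<epsilon> :: real assume e: "\<epsilon> > 0"
    have "(\<lambda>j. q ^ j * suminf Zt) \<longlonglongrightarrow> 0 * suminf Zt"
      using q0 q1 by (intro tendsto_mult_right LIMSEQ_power_zero) auto
    hence "\<forall>\<^sub>F j in sequentially. q ^ j * suminf Zt < \<epsilon>\<^sup>2"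
      using e by (intro order_tendstoD) auto
    then obtain j where j: "q ^ j * suminf Zt < \<epsilon>\<^sup>2" by (meson eventually_sequentially order.refl)
    have "nw (\<lambda>m. V j m - ev n m) < \<epsilon>"
    proof -
      have "nw2 (\<lambda>m. V j m - ev n m) < \<epsilon>\<^sup>2" using nwR[of j] j by simp
      thus ?thesis unfolding nw_def using e by (simp add: real_sqrt_less_iff real_less_lsqrt)
    qed
    thus "\<exists>w. Apx w \<and> nw (\<lambda>m. w m - ev n m) < \<epsilon>" using apxV by blast
  qed
qed

end

context thm_setup
begin

context
  fixes f :: "complex \<Rightarrow> complex" and K :: real
  assumes K0: "K \<ge> 0"
    and fK: "\<And>N x g. okf N x \<Longrightarrow> cmod (Lv f N x g) \<le> sqrt K * nw (Wv N x g)"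
begin

lemma Lip:
  assumes o1: "okf N1 x1" and o2: "okf N2 x2"
  shows "cmod (Lv f N1 x1 g1 - Lv f N2 x2 g2) \<le> sqrt K * nw (\<lambda>n. Wv N1 x1 g1 n - Wv N2 x2 g2 n)"
proof -
  let ?g = "catx N1 g1 (\<lambda>i. (-1) * g2 i)"
  have "cmod (Lv f (N1 + N2) (catx N1 x1 x2) ?g) \<le> sqrt K * nw (Wv (N1 + N2) (catx N1 x1 x2) ?g)"
    by (rule fK[OF okf_cat[OF o1 o2]])
  moreover have "Lv f (N1 + N2) (catx N1 x1 x2) ?g = Lv f N1 x1 g1 - Lv f N2 x2 g2"
    unfolding Lv_cat Lv_scale by simp
  moreover have "Wv (N1 + N2) (catx N1 x1 x2) ?g = (\<lambda>n. Wv N1 x1 g1 n - Wv N2 x2 g2 n)"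
    unfolding Wv_cat Wv_scale by (rule ext) simp
  ultimately show ?thesis by simp
qed

definition Pv :: "(nat \<Rightarrow> complex) \<Rightarrow> complex \<Rightarrow> bool" where
  "Pv v y \<longleftrightarrow> (\<forall>N x g. okf N x \<longrightarrow> cmod (Lv f N x g - y) \<le> sqrt K * nw (\<lambda>m. Wv N x g m - v m))"

lemma Pv_zero: "Pv (\<lambda>m. 0) 0"
  unfolding Pv_def using fK by simp

lemma eps_lemma:
  fixes x B C :: real
  assumes C: "C \<ge> 0" and h: "\<And>\<delta>. \<delta> > 0 \<Longrightarrow> x \<le> B + C * \<delta>"
  shows "x \<le> B"
proof (rule field_le_epsilon)
  fix e :: real assume e: "e > 0"
  have "e / (C + 1) > 0" using e C by simp
  hence "x \<le> B + C * (e / (C + 1))" by (rule h)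
  also have "C * (e / (C + 1)) \<le> e"
  proof -
    have "C * e \<le> (C + 1) * e" using e by simp
    thus ?thesis using C by (simp add: divide_le_eq mult.commute)
  qed
  finally show "x \<le> B + e" by simp
qed

lemma Pv_exists:
  assumes av: "Apx v" shows "\<exists>y. Pv v y"
proof -
  have fv: "fin v" using av by (rule Apx_fin)
  have "\<forall>j::nat. \<exists>N x g. okf N x \<and> nw (\<lambda>n. Wv N x g n - v n) < inverse (real (Suc j))"
    using av unfolding Apx_def by simp
  then obtain NN xx gg where
    ok: "\<And>j. okf (NN j) (xx j)" and cl: "\<And>j. nw (\<lambda>n. Wv (NN j) (xx j) (gg j) n - v n) < inverse (real (Suc j))"
    by metis
  define W where "W j = Wv (NN j) (xx j) (gg j)" for j
  define Y where "Y j = Lv f (NN j) (xx j) (gg j)" for j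
  have fW: "fin (W j)" for j unfolding W_def using ok by (rule fin_Wv)
  have dist_bound: "cmod (Lv f N x g - Y j) \<le> sqrt K * (nw (\<lambda>m. Wv N x g m - v m) + inverse (real (Suc j)))"
    if o: "okf N x" for N x g j
  proof -
    have a1: "cmod (Lv f N x g - Y j) \<le> sqrt K * nw (\<lambda>m. Wv N x g m - W j m)"
      unfolding Y_def W_def by (rule Lip[OF o ok])
    have "nw (\<lambda>m. Wv N x g m - W j m) \<le> nw (\<lambda>m. Wv N x g m - v m) + nw (\<lambda>m. v m - W j m)"
      by (rule nw_triangle_diff[OF fin_Wv[OF o] fv fW])
    also have "nw (\<lambda>m. v m - W j m) = nw (\<lambda>m. W j m - v m)" by (rule nw_commute[OF fv fW])
    also have "\<dots> \<le> inverse (real (Suc j))" using cl[of j] unfolding W_def by simp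
    finally have "sqrt K * nw (\<lambda>m. Wv N x g m - W j m) \<le> sqrt K * (nw (\<lambda>m. Wv N x g m - v m) + inverse (real (Suc j)))"
      using K0 by (intro mult_left_mono) auto
    thus ?thesis using a1 by linarith
  qed
  have "Cauchy Y"
  proof (rule metric_CauchyI)
    fix e :: real assume e: "e > 0"
    obtain M :: nat where M: "2 * sqrt K * inverse (real (Suc M)) < e"
    proof -
      have "(\<lambda>j. 2 * sqrt K * inverse (real (Suc j))) \<longlonglongrightarrow> 2 * sqrt K * 0"
        by (intro tendsto_mult_left LIMSEQ_inverse_real_of_nat)
      hence "\<forall>\<^sub>F j in sequentially. 2 * sqrt K * inverse (real (Suc j)) < e" using e
        by (intro order_tendstoD) auto
      thus ?thesis using that by (meson eventually_sequentially order.refl)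
    qed
    show "\<exists>M. \<forall>m\<ge>M. \<forall>n\<ge>M. dist (Y m) (Y n) < e"
    proof (intro exI[of _ M] allI impI)
      fix m n assume mM: "m \<ge> M" and nM: "n \<ge> M"
      have im: "inverse (real (Suc m)) \<le> inverse (real (Suc M))" using mM by (simp add: le_imp_inverse_le)
      have in': "inverse (real (Suc n)) \<le> inverse (real (Suc M))" using nM by (simp add: le_imp_inverse_le)
      have "dist (Y m) (Y n) = cmod (Y m - Y n)" by (simp add: dist_norm)
      also have "\<dots> \<le> sqrt K * (nw (\<lambda>i. W m i - v i) + inverse (real (Suc n)))"
        unfolding Y_def[of m] W_def using dist_bound[OF ok[of m], of "gg m" n] by simp
      also have "\<dots> \<le> sqrt K * (inverse (real (Suc m)) + inverse (real (Suc n)))"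
        using cl[of m] K0 unfolding W_def by (intro mult_left_mono) auto
      also have "\<dots> \<le> 2 * sqrt K * inverse (real (Suc M))"
      proof -
        have "inverse (real (Suc m)) + inverse (real (Suc n)) \<le> 2 * inverse (real (Suc M))"
          using im in' by linarith
        hence "sqrt K * (inverse (real (Suc m)) + inverse (real (Suc n))) \<le> sqrt K * (2 * inverse (real (Suc M)))"
          using K0 by (intro mult_left_mono) auto
        thus ?thesis by (simp add: mult_ac)
      qed
      also have "\<dots> < e" by (rule M)
      finally show "dist (Y m) (Y n) < e" .
    qed
  qed
  then obtain y where Yy: "Y \<longlonglongrightarrow> y" using Cauchy_convergent_iff convergent_def by blast
  have "Pv v y" unfolding Pv_def
  proof (intro allI impI)
    fix N :: nat and x g :: "nat \<Rightarrow> complex" assume o: "okf N x"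
    have "(\<lambda>j. cmod (Lv f N x g - Y j)) \<longlonglongrightarrow> cmod (Lv f N x g - y)"
      by (intro tendsto_norm tendsto_diff tendsto_const Yy)
    moreover have "(\<lambda>j. sqrt K * (nw (\<lambda>m. Wv N x g m - v m) + inverse (real (Suc j)))) \<longlonglongrightarrow>
                   sqrt K * (nw (\<lambda>m. Wv N x g m - v m) + 0)"
      by (intro tendsto_mult_left tendsto_add tendsto_const LIMSEQ_inverse_real_of_nat)
    ultimately show "cmod (Lv f N x g - y) \<le> sqrt K * nw (\<lambda>m. Wv N x g m - v m)"
      using dist_bound[OF o] by (intro tendsto_le[of sequentially]) auto
  qed
  thus ?thesis by blast
qed

lemma Pv_add:
  assumes fv: "fin v" and aw: "Apx w" and pv: "Pv v y" and pw: "Pv w z"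
  shows "Pv (\<lambda>m. v m + w m) (y + z)"
  unfolding Pv_def
proof (intro allI impI)
  fix N :: nat and x g :: "nat \<Rightarrow> complex" assume o: "okf N x"
  have fw: "fin w" using aw by (rule Apx_fin)
  let ?B = "sqrt K * nw (\<lambda>m. Wv N x g m - (v m + w m))"
  show "cmod (Lv f N x g - (y + z)) \<le> ?B"
  proof (rule eps_lemma[of "2 * sqrt K"])
    show "2 * sqrt K \<ge> 0" using K0 by simp
    fix \<delta> :: real assume d: "\<delta> > 0"
    obtain N2 x2 g2 where o2: "okf N2 x2" and c2: "nw (\<lambda>n. Wv N2 x2 g2 n - w n) < \<delta>"
      using aw d unfolding Apx_def by blast
    let ?g = "catx N g (\<lambda>i. (-1) * g2 i)"
    have oc: "okf (N + N2) (catx N x x2)" by (rule okf_cat[OF o o2])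
    have Lc: "Lv f (N + N2) (catx N x x2) ?g = Lv f N x g - Lv f N2 x2 g2"
      unfolding Lv_cat Lv_scale by simp
    have Wc: "Wv (N + N2) (catx N x x2) ?g m = Wv N x g m - Wv N2 x2 g2 m" for m
      unfolding Wv_cat Wv_scale by simp
    have t1: "cmod (Lv f N x g - (y + z)) \<le> cmod (Lv f (N + N2) (catx N x x2) ?g - y) + cmod (Lv f N2 x2 g2 - z)"
      unfolding Lc by (rule order.trans[OF _ norm_triangle_ineq]) (simp add: algebra_simps)
    have t2: "cmod (Lv f (N + N2) (catx N x x2) ?g - y) \<le> sqrt K * nw (\<lambda>m. Wv (N + N2) (catx N x x2) ?g m - v m)"
      using pv oc unfolding Pv_def by blast
    have t3: "(\<lambda>m. Wv (N + N2) (catx N x x2) ?g m - v m) = (\<lambda>m. (Wv N x g m - (v m + w m)) + (w m - Wv N2 x2 g2 m))"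
      unfolding Wc by (simp add: algebra_simps)
    have t4: "nw (\<lambda>m. (Wv N x g m - (v m + w m)) + (w m - Wv N2 x2 g2 m)) \<le>
               nw (\<lambda>m. Wv N x g m - (v m + w m)) + nw (\<lambda>m. w m - Wv N2 x2 g2 m)"
      by (intro nw_triangle fin_diff fin_add fin_Wv o o2 fv fw)
    have t5: "nw (\<lambda>m. w m - Wv N2 x2 g2 m) = nw (\<lambda>m. Wv N2 x2 g2 m - w m)"
      by (rule nw_commute[OF fw fin_Wv[OF o2]])
    have t6: "cmod (Lv f N2 x2 g2 - z) \<le> sqrt K * nw (\<lambda>m. Wv N2 x2 g2 m - w m)"
      using pw o2 unfolding Pv_def by blast
    have sK: "sqrt K \<ge> 0" using K0 by simp
    have "sqrt K * nw (\<lambda>m. Wv (N + N2) (catx N x x2) ?g m - v m) \<le>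
          sqrt K * (nw (\<lambda>m. Wv N x g m - (v m + w m)) + nw (\<lambda>m. Wv N2 x2 g2 m - w m))"
      unfolding t3 using t4 t5 sK by (intro mult_left_mono) auto
    hence "cmod (Lv f N x g - (y + z)) \<le> ?B + 2 * sqrt K * nw (\<lambda>m. Wv N2 x2 g2 m - w m)"
      using t1 t2 t6 by (simp add: algebra_simps)
    also have "\<dots> \<le> ?B + 2 * sqrt K * \<delta>" using c2 K0 by (intro add_left_mono mult_left_mono) auto
    finally show "cmod (Lv f N x g - (y + z)) \<le> ?B + 2 * sqrt K * \<delta>" .
  qed
qed

lemma Pv_scale:
  assumes fv: "fin v" and pv: "Pv v y"
  shows "Pv (\<lambda>m. \<alpha> * v m) (cnj \<alpha> * y)"
proof (cases "\<alpha> = 0")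
  case True thus ?thesis using Pv_zero by simp
next
  case False
  show ?thesis unfolding Pv_def
  proof (intro allI impI)
    fix N :: nat and x g :: "nat \<Rightarrow> complex" assume o: "okf N x"
    let ?g = "\<lambda>i::nat. inverse \<alpha> * g i"
    have "cmod (Lv f N x ?g - y) \<le> sqrt K * nw (\<lambda>m. Wv N x ?g m - v m)" using pv o unfolding Pv_def by blast
    hence "cmod \<alpha> * cmod (Lv f N x ?g - y) \<le> cmod \<alpha> * (sqrt K * nw (\<lambda>m. Wv N x ?g m - v m))"
      by (intro mult_left_mono) auto
    moreover have "cmod \<alpha> * cmod (Lv f N x ?g - y) = cmod (Lv f N x g - cnj \<alpha> * y)"
    proof -
      have "cmod \<alpha> * cmod (Lv f N x ?g - y) = cmod (cnj \<alpha> * (Lv f N x ?g - y))" by (simp add: norm_mult)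
      also have "cnj \<alpha> * (Lv f N x ?g - y) = Lv f N x g - cnj \<alpha> * y"
      proof -
        have "cnj \<alpha> * cnj (inverse \<alpha>) = 1" using False by (simp add: complex_cnj_mult[symmetric])
        thus ?thesis unfolding Lv_scale by (simp add: algebra_simps mult.assoc[symmetric])
      qed
      finally show ?thesis .
    qed
    moreover have "cmod \<alpha> * nw (\<lambda>m. Wv N x ?g m - v m) = nw (\<lambda>m. Wv N x g m - \<alpha> * v m)"
    proof -
      have "cmod \<alpha> * nw (\<lambda>m. Wv N x ?g m - v m) = nw (\<lambda>m. \<alpha> * (Wv N x ?g m - v m))"
        by (rule nw_scale[symmetric]) (intro fin_diff fin_Wv o fv)
      also have "(\<lambda>m. \<alpha> * (Wv N x ?g m - v m)) = (\<lambda>m. Wv N x g m - \<alpha> * v m)"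
        unfolding Wv_scale by (rule ext) (simp add: False right_diff_distrib mult.assoc[symmetric])
      finally show ?thesis .
    qed
    ultimately show "cmod (Lv f N x g - cnj \<alpha> * y) \<le> sqrt K * nw (\<lambda>m. Wv N x g m - \<alpha> * v m)"
      by (simp add: mult_ac)
  qed
qed

lemma Pv_sum:
  "finite F \<Longrightarrow> (\<And>j. j \<in> F \<Longrightarrow> Apx (h j) \<and> Pv (h j) (yy j)) \<Longrightarrow>
   Pv (\<lambda>m. \<Sum>j\<in>F. h j m) (\<Sum>j\<in>F. yy j)"
proof (induction F rule: finite_induct)
  case empty thus ?case using Pv_zero by simp
next
  case (insert j F)
  have fF: "fin (\<lambda>m. \<Sum>j\<in>F. h j m)" using insert by (intro fin_sum Apx_fin) auto
  have "Pv (\<lambda>m. (\<Sum>j\<in>F. h j m) + h j m) ((\<Sum>j\<in>F. yy j) + yy j)"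
    using insert by (intro Pv_add fF) auto
  thus ?case using insert by (simp add: add.commute)
qed

end
end

lemma mult_cnj_sq: "z * cnj z = (complex_of_real (cmod z))\<^sup>2"
  by (metis complex_norm_square of_real_power)

context thm_setup
begin

lemma sum_ev: "finite A \<Longrightarrow> (\<Sum>n\<in>A. \<alpha> n * ev n m) = (if m \<in> A then \<alpha> m else 0)"
proof -
  assume A: "finite A"
  have "(\<Sum>n\<in>A. \<alpha> n * ev n m) = (\<Sum>n\<in>A. if n = m then \<alpha> n else 0)"
    by (intro sum.cong refl) (auto simp: ev_def)
  also have "\<dots> = (if m \<in> A then \<alpha> m else 0)" using A by (simp add: sum.delta')
  finally show ?thesis .
qed

lemma nw2_tail:
  assumes fw: "fin W"
  shows "nw2 (\<lambda>m. W m - (\<Sum>n\<in>{1..M}. W n * ev n m)) = nw2 W - wN M W"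
proof -
  let ?a = "\<lambda>m. om m * (cmod (W m))\<^sup>2"
  have sa: "summable ?a" using fw unfolding fin_def .
  have eq: "om m * (cmod (W m - (\<Sum>n\<in>{1..M}. W n * ev n m)))\<^sup>2 = (if m \<le> M then 0 else ?a m)" for m
  proof (cases "m \<in> {1..M}")
    case True
    have "(\<Sum>n\<in>{1..M}. W n * ev n m) = W m"
      using True by (simp add: sum_ev)
    thus ?thesis using True by simp
  next
    case False
    have "(\<Sum>n\<in>{1..M}. W n * ev n m) = 0" using False by (subst sum_ev) auto
    show ?thesis
    proof (cases "m = 0")
      case True thus ?thesis by (simp add: om_def)
    next
      case m0: False
      hence "m > M" using False by auto
      thus ?thesis using \<open>(\<Sum>n\<in>{1..M}. W n * ev n m) = 0\<close> by simp
    qed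
  qed
  have "nw2 (\<lambda>m. W m - (\<Sum>n\<in>{1..M}. W n * ev n m)) = (\<Sum>m. if m \<le> M then 0 else ?a m)"
    unfolding nw2_def eq ..
  also have "\<dots> = (\<Sum>i. ?a (i + Suc M))"
  proof -
    have s2: "summable (\<lambda>m. if m \<le> M then 0 else ?a m)"
      by (rule summable_comparison_test'[where N=0, OF sa]) (auto simp: om_nonneg)
    have "(\<Sum>m. if m \<le> M then 0 else ?a m) = (\<Sum>i. (if i + Suc M \<le> M then 0 else ?a (i + Suc M))) + (\<Sum>m<Suc M. if m \<le> M then 0 else ?a m)"
      by (rule suminf_split_initial_segment[OF s2])
    thus ?thesis by simp
  qed
  also have "\<dots> = nw2 W - (\<Sum>m<Suc M. ?a m)"
    unfolding nw2_def using suminf_split_initial_segment[OF sa, of "Suc M"] by simp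
  also have "(\<Sum>m<Suc M. ?a m) = wN M W"
  proof -
    have "(\<Sum>m<Suc M. ?a m) = (\<Sum>m\<in>{0..M}. ?a m)" by (simp add: atLeast0AtMost lessThan_Suc_atMost)
    also have "\<dots> = ?a 0 + (\<Sum>m\<in>{Suc 0..M}. ?a m)" by (simp add: sum.atLeast_Suc_atMost)
    finally show ?thesis unfolding wN_def by (simp add: om_def)
  qed
  finally show ?thesis .
qed

context
  fixes f :: "complex \<Rightarrow> complex" and K :: real
  assumes K0: "K \<ge> 0"
    and fK: "\<And>N x g. okf N x \<Longrightarrow> cmod (Lv f N x g) \<le> sqrt K * nw (Wv N x g)"
begin

lemma Pv_iff: "Pv f K v y \<longleftrightarrow> (\<forall>N x g. okf N x \<longrightarrow> cmod (Lv f N x g - y) \<le> sqrt K * nw (\<lambda>m. Wv N x g m - v m))"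
  using K0 fK by (rule Pv_def)

definition ell :: "nat \<Rightarrow> complex" where "ell n = (SOME y. Pv f K (ev n) y)"

lemma ell: "n \<ge> 1 \<Longrightarrow> Pv f K (ev n) (ell n)"
  unfolding ell_def using Pv_exists[OF K0 fK Apx_ev] by (rule someI_ex)

lemma Pv_comb:
  "Pv f K (\<lambda>m. \<Sum>n\<in>{1..M}. \<alpha> n * ev n m) (\<Sum>n\<in>{1..M}. cnj (\<alpha> n) * ell n)"
  by (rule Pv_sum[OF K0 fK]) (auto intro!: Apx_scale Apx_ev Pv_scale[OF K0 fK] fin_ev ell)

definition uu :: "nat \<Rightarrow> real" where "uu n = (cmod (ell n))\<^sup>2 / om n"

lemma uu_nonneg: "uu n \<ge> 0" unfolding uu_def using om_nonneg by simp

lemma bessel: "(\<Sum>n\<in>{1..M}. uu n) \<le> K"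
proof -
  define B where "B = (\<Sum>n\<in>{1..M}. uu n)"
  have B0: "B \<ge> 0" unfolding B_def using uu_nonneg by (simp add: sum_nonneg)
  define v where "v m = (\<Sum>n\<in>{1..M}. (ell n / complex_of_real (om n)) * ev n m)" for m
  have pv: "Pv f K v (\<Sum>n\<in>{1..M}. cnj (ell n / complex_of_real (om n)) * ell n)"
    unfolding v_def by (rule Pv_comb)
  have y: "(\<Sum>n\<in>{1..M}. cnj (ell n / complex_of_real (om n)) * ell n) = complex_of_real B"
    unfolding B_def uu_def of_real_sum
    by (intro sum.cong refl) (simp add: mult_cnj_sq mult.commute)
  have vv: "v m = (if m \<in> {1..M} then ell m / complex_of_real (om m) else 0)" for m
    unfolding v_def by (rule sum_ev) simp
  have fv: "fin v" by (rule fin_finite[of M]) (simp add: vv)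
  have "nw2 v = (\<Sum>m\<in>{1..M}. om m * (cmod (v m))\<^sup>2)"
    unfolding nw2_def by (rule suminf_finite) (auto simp: vv)
  also have "\<dots> = B" unfolding B_def uu_def
  proof (intro sum.cong refl)
    fix m assume m: "m \<in> {1..M}"
    have "om m > 0" using m by (intro om_pos) auto
    thus "om m * (cmod (v m))\<^sup>2 = (cmod (ell m))\<^sup>2 / om m"
      using m by (simp add: vv norm_divide power_divide power2_eq_square)
  qed
  finally have nv: "nw2 v = B" .
  have "cmod (Lv f 0 (\<lambda>_. 0) (\<lambda>_. 0) - complex_of_real B) \<le> sqrt K * nw (\<lambda>m. Wv 0 (\<lambda>_. 0) (\<lambda>_. 0) m - v m)"
    using pv okf_empty unfolding Pv_iff y by blast
  moreover have "nw (\<lambda>m. Wv 0 (\<lambda>_. 0) (\<lambda>_. 0) m - v m) = sqrt B"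
  proof -
    have "nw (\<lambda>m. Wv 0 (\<lambda>_. 0) (\<lambda>_. 0) m - v m) = nw (\<lambda>m. (-1) * v m)" unfolding Wv_empty by simp
    also have "\<dots> = nw v" using nw_scale[OF fv, of "-1"] by simp
    finally show ?thesis unfolding nw_def nv .
  qed
  ultimately have hB: "B \<le> sqrt K * sqrt B" unfolding Lv_empty using B0 by simp
  have "B \<le> K"
  proof (cases "B = 0")
    case True thus ?thesis using K0 by simp
  next
    case False
    hence sB: "sqrt B > 0" using B0 by simp
    have "sqrt B * sqrt B \<le> sqrt K * sqrt B" using hB B0 by (metis abs_of_nonneg real_sqrt_mult_self)
    hence "sqrt B \<le> sqrt K" using sB by (rule mult_right_le_imp_le)
    thus ?thesis by simp
  qed
  thus ?thesis unfolding B_def .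
qed

lemma uu_summable: "summable uu"
proof -
  have bd: "sum uu {..<M} \<le> K" for M
  proof -
    have "sum uu {..<M} = sum uu {1..<M}"
    proof -
      have "{..<M} = (if M = 0 then {} else insert 0 {1..<M})" by auto
      thus ?thesis by (simp add: uu_def om_def)
    qed
    also have "\<dots> \<le> sum uu {1..M}" using uu_nonneg by (intro sum_mono2) auto
    also have "\<dots> \<le> K" by (rule bessel)
    finally show ?thesis .
  qed
  show ?thesis by (rule summableI_nonneg_bounded[of uu K, OF uu_nonneg bd])
qed

lemma approx:
  assumes e: "\<epsilon> > 0"
  shows "\<exists>M. \<forall>N x g. okf N x \<longrightarrow>
           cmod (Lv f N x g - Lv (dirichlet_poly M ell) N x g) \<le> sqrt \<epsilon> * nw (Wv N x g)"
proof -
  obtain M where M: "\<forall>m\<ge>M. \<forall>n. norm (sum uu {m..<n}) < \<epsilon>"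
    using uu_summable e unfolding summable_Cauchy by blast
  have tail: "(\<Sum>n\<in>{M<..M'}. uu n) \<le> \<epsilon>" for M'
  proof -
    have "{M<..M'} = {Suc M..<Suc M'}" by auto
    hence "(\<Sum>n\<in>{M<..M'}. uu n) = sum uu {Suc M..<Suc M'}" by simp
    also have "\<dots> \<le> norm (sum uu {Suc M..<Suc M'})" by simp
    also have "\<dots> < \<epsilon>" by (rule M[rule_format]) simp
    finally show ?thesis by simp
  qed
  have "cmod (Lv f N x g - Lv (dirichlet_poly M ell) N x g) \<le> sqrt \<epsilon> * nw (Wv N x g)"
    if o: "okf N x" for N x g
  proof -
    let ?W = "Wv N x g"
    have fW: "fin ?W" using o by (rule fin_Wv)
    have step: "cmod (Lv f N x g - Lv (dirichlet_poly M ell) N x g) \<le>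
                sqrt K * nw (\<lambda>m. ?W m - (\<Sum>n\<in>{1..M'}. ?W n * ev n m)) + sqrt \<epsilon> * nw ?W"
      if M': "M' \<ge> M" for M'
    proof -
      have pv: "Pv f K (\<lambda>m. \<Sum>n\<in>{1..M'}. ?W n * ev n m) (\<Sum>n\<in>{1..M'}. cnj (?W n) * ell n)"
        by (rule Pv_comb)
      have a1: "cmod (Lv f N x g - (\<Sum>n\<in>{1..M'}. cnj (?W n) * ell n)) \<le>
                 sqrt K * nw (\<lambda>m. ?W m - (\<Sum>n\<in>{1..M'}. ?W n * ev n m))"
        by (rule pv[unfolded Pv_iff, rule_format, OF o])
      have split: "{1..M'} = {1..M} \<union> {M<..M'}" using M' by auto
      have "(\<Sum>n\<in>{1..M'}. cnj (?W n) * ell n) = (\<Sum>n\<in>{1..M}. cnj (?W n) * ell n) + (\<Sum>n\<in>{M<..M'}. cnj (?W n) * ell n)"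
        unfolding split by (rule sum.union_disjoint) auto
      hence a2: "(\<Sum>n\<in>{1..M'}. cnj (?W n) * ell n) - Lv (dirichlet_poly M ell) N x g = (\<Sum>n\<in>{M<..M'}. ell n * cnj (?W n))"
        unfolding Lv_dpoly by (simp add: mult.commute)
      have "cmod (\<Sum>n\<in>{M<..M'}. ell n * cnj (?W n)) \<le>
            sqrt (\<Sum>n\<in>{M<..M'}. (cmod (ell n))\<^sup>2 / om n) * sqrt (\<Sum>n\<in>{M<..M'}. om n * (cmod (?W n))\<^sup>2)"
        by (rule fin_CS) (auto intro: om_pos)
      also have "\<dots> \<le> sqrt \<epsilon> * nw ?W"
      proof (rule mult_mono)
        show "sqrt (\<Sum>n\<in>{M<..M'}. (cmod (ell n))\<^sup>2 / om n) \<le> sqrt \<epsilon>"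
          using tail[of M'] unfolding uu_def by simp
        show "sqrt (\<Sum>n\<in>{M<..M'}. om n * (cmod (?W n))\<^sup>2) \<le> nw ?W"
          unfolding nw_def using partial_le_nw2[OF _ fW] by simp
        show "0 \<le> sqrt \<epsilon>" using e by simp
        show "0 \<le> sqrt (\<Sum>n\<in>{M<..M'}. om n * (cmod (?W n))\<^sup>2)"
          using om_nonneg by (simp add: sum_nonneg)
      qed
      finally have a3: "cmod (\<Sum>n\<in>{M<..M'}. ell n * cnj (?W n)) \<le> sqrt \<epsilon> * nw ?W" .
      have "cmod (Lv f N x g - Lv (dirichlet_poly M ell) N x g) \<le>
            cmod (Lv f N x g - (\<Sum>n\<in>{1..M'}. cnj (?W n) * ell n)) +
            cmod ((\<Sum>n\<in>{1..M'}. cnj (?W n) * ell n) - Lv (dirichlet_poly M ell) N x g)"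
        by (rule order.trans[OF _ norm_triangle_ineq]) simp
      thus ?thesis using a1 a2 a3 by simp
    qed
    have lim: "(\<lambda>M'. sqrt K * sqrt (nw2 ?W - wN M' ?W)) \<longlonglongrightarrow> sqrt K * sqrt (nw2 ?W - nw2 ?W)"
      by (intro tendsto_mult_left tendsto_real_sqrt tendsto_diff tendsto_const wN_lim fW)
    show ?thesis
    proof (rule field_le_epsilon)
      fix \<delta> :: real assume d: "\<delta> > 0"
      have "\<forall>\<^sub>F M' in sequentially. sqrt K * sqrt (nw2 ?W - wN M' ?W) < \<delta>"
        using lim d by (intro order_tendstoD) auto
      moreover have "\<forall>\<^sub>F M' in sequentially. M' \<ge> M" by (rule eventually_ge_at_top)
      ultimately obtain M' where M'1: "sqrt K * sqrt (nw2 ?W - wN M' ?W) < \<delta>" and M'2: "M' \<ge> M"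
        by (metis (mono_tags, lifting) eventually_sequentially eventually_conj_iff order.refl)
      have "nw (\<lambda>m. ?W m - (\<Sum>n\<in>{1..M'}. ?W n * ev n m)) = sqrt (nw2 ?W - wN M' ?W)"
        unfolding nw_def nw2_tail[OF fW] ..
      thus "cmod (Lv f N x g - Lv (dirichlet_poly M ell) N x g) \<le> sqrt \<epsilon> * nw ?W + \<delta>"
        using step[OF M'2] M'1 by simp
    qed
  qed
  thus ?thesis by blast
qed

end
end

context thm_setup
begin

lemma Lv_diff: "Lv (\<lambda>s. f s - p s) N x g = Lv f N x g - Lv p N x g"
  unfolding Lv_def by (simp add: right_diff_distrib sum_subtractf)

lemma C2_pos: "C2 > 0"
proof -
  have "Bb \<ge> 0" unfolding Bb_def by (simp add: sum_nonneg)
  moreover have "real k * S \<ge> 0" using S_nonneg by simp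
  ultimately show ?thesis unfolding C2_def by linarith
qed

lemma part5:
  assumes inH: "in_rkhs (kappa a) (half_plane \<rho>) f" and e: "\<epsilon> > 0"
  shows "\<exists>p. is_dirichlet_poly p \<and> rkhs_norm (kappa a) (half_plane \<rho>) (\<lambda>s. f s - p s) < \<epsilon>"
proof -
  obtain C where C: "rkhs_bound (kappa a) (half_plane \<rho>) f C" using inH unfolding in_rkhs_def by blast
  hence C0: "C \<ge> 0" and Cb: "\<And>N x g. okf N x \<Longrightarrow> (cmod (Lv f N x g))\<^sup>2 \<le> C * Re (Qf N x g)"
    unfolding rkhs_bound_iff by auto
  define K where "K = C * C2"
  have K0: "K \<ge> 0" unfolding K_def using C0 C2_pos by simp
  have fK: "cmod (Lv f N x g) \<le> sqrt K * nw (Wv N x g)" if o: "okf N x" for N x g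
  proof -
    have "(cmod (Lv f N x g))\<^sup>2 \<le> C * Re (Qf N x g)" by (rule Cb[OF o])
    also have "\<dots> \<le> C * (C2 * nw2 (Wv N x g))"
      using Qf_bounds(3)[OF o fin_Wv[OF o]] C0 by (intro mult_left_mono) auto
    also have "\<dots> = K * nw2 (Wv N x g)" unfolding K_def by simp
    finally have "cmod (Lv f N x g) \<le> sqrt (K * nw2 (Wv N x g))" by (rule real_le_rsqrt)
    thus ?thesis unfolding nw_def by (simp add: real_sqrt_mult)
  qed
  define \<epsilon>' where "\<epsilon>' = eta * \<epsilon>\<^sup>2 / 4"
  have e': "\<epsilon>' > 0" unfolding \<epsilon>'_def using eta_pos e by simp
  have "\<exists>M. \<forall>N x g. okf N x \<longrightarrow>
           cmod (Lv f N x g - Lv (dirichlet_poly M (ell f K)) N x g) \<le> sqrt \<epsilon>' * nw (Wv N x g)"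
    by (rule approx[where f=f and K=K and \<epsilon>=\<epsilon>']) (use K0 fK e' in auto)
  then obtain M where M: "\<And>N x g. okf N x \<Longrightarrow>
           cmod (Lv f N x g - Lv (dirichlet_poly M (ell f K)) N x g) \<le> sqrt \<epsilon>' * nw (Wv N x g)"
    by blast
  define p where "p = dirichlet_poly M (ell f K)"
  have rb: "rkhs_bound (kappa a) (half_plane \<rho>) (\<lambda>s. f s - p s) (\<epsilon>\<^sup>2 / 4)"
    unfolding rkhs_bound_iff
  proof (intro conjI allI impI)
    show "\<epsilon>\<^sup>2 / 4 \<ge> 0" by simp
    fix N x g assume o: "okf N x"
    have fW: "fin (Wv N x g)" using o by (rule fin_Wv)
    have "cmod (Lv (\<lambda>s. f s - p s) N x g) \<le> sqrt \<epsilon>' * nw (Wv N x g)"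
      unfolding Lv_diff p_def by (rule M[OF o])
    hence "(cmod (Lv (\<lambda>s. f s - p s) N x g))\<^sup>2 \<le> (sqrt \<epsilon>' * nw (Wv N x g))\<^sup>2"
      by (intro power_mono) auto
    also have "\<dots> = \<epsilon>' * nw2 (Wv N x g)"
      unfolding nw_def using e' nw2_nonneg[OF fW] by (simp add: power_mult_distrib)
    also have "\<dots> \<le> \<epsilon>' * (Re (Qf N x g) / eta)"
    proof (intro mult_left_mono)
      have "eta * nw2 (Wv N x g) \<le> Re (Qf N x g)" using Qf_psd[OF o] by blast
      thus "nw2 (Wv N x g) \<le> Re (Qf N x g) / eta" using eta_pos by (simp add: field_simps)
    qed (use e' in simp)
    also have "\<dots> = \<epsilon>\<^sup>2 / 4 * Re (Qf N x g)" unfolding \<epsilon>'_def using eta_pos by simp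
    finally show "(cmod (Lv (\<lambda>s. f s - p s) N x g))\<^sup>2 \<le> \<epsilon>\<^sup>2 / 4 * Re (Qf N x g)" .
  qed
  have "Inf {C. rkhs_bound (kappa a) (half_plane \<rho>) (\<lambda>s. f s - p s) C} \<le> \<epsilon>\<^sup>2 / 4"
    using rb by (intro cInf_lower) (auto simp: bdd_below_def rkhs_bound_def)
  hence "rkhs_norm (kappa a) (half_plane \<rho>) (\<lambda>s. f s - p s) \<le> sqrt (\<epsilon>\<^sup>2 / 4)"
    unfolding rkhs_norm_def by simp
  also have "sqrt (\<epsilon>\<^sup>2 / 4) = \<epsilon> / 2" using e by (simp add: real_sqrt_divide)
  also have "\<dots> < \<epsilon>" using e by simp
  finally have "rkhs_norm (kappa a) (half_plane \<rho>) (\<lambda>s. f s - p s) < \<epsilon>" .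
  moreover have "is_dirichlet_poly p" unfolding p_def is_dirichlet_poly_def by blast
  ultimately show ?thesis by blast
qed

end

theorem theorem3p5:
  fixes k :: nat and b :: "nat \<Rightarrow> nat \<Rightarrow> complex" and c :: "nat \<Rightarrow> complex"
    and d :: "nat \<Rightarrow> real" and \<rho> :: real
  assumes "k \<ge> 1"
    and "in_S k b c d"
    and "s_val k b c d > 0"
    and "\<rho> > 1"
    and "d \<in> O(\<lambda>l. real l powr (\<rho> - 1))"
  shows "dirichlet_series_kernel (block_mat k b c d) \<rho>
       \<and> psd_kernel (kappa (block_mat k b c d)) (half_plane \<rho>)
       \<and> (\<forall>n\<ge>k + 1. is_dirichlet_poly (analytic_symbol (block_mat k b c d) n))
       \<and> (\<forall>p. is_dirichlet_poly p \<longrightarrow>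
              in_rkhs (kappa (block_mat k b c d)) (half_plane \<rho>) p)
       \<and> (\<forall>f. in_rkhs (kappa (block_mat k b c d)) (half_plane \<rho>) f \<longrightarrow>
              (\<forall>\<epsilon>>0. \<exists>p. is_dirichlet_poly p \<and>
                 rkhs_norm (kappa (block_mat k b c d)) (half_plane \<rho>) (\<lambda>s. f s - p s) < \<epsilon>))"
proof -
  interpret thm_setup k b c d \<rho>
    by unfold_locales (use assms in auto)
  show ?thesis using kernel_part1 kernel_part2 part3 part4 part5 by blast
qed

end
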